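(* Let $A$ be a self-contained band operator on $\ell^2(\mathbb{Z})$. Then $\nu(A)=\nu(A^* )$, and \[ \nu_N(A)\searrow\nu(A)=\frac{1}{\|A^{-1}\|}\qquad\text{as }N\to\infty. \]
   Context: A band operator on $\ell^2(\mathbb{Z})$ is a bounded operator with matrix entries $A_{ij}=0$ for $|i-j|>w$ (some $w$). For $N\in\mathbb{N}$, an $N$-column submatrix of $A$ is $C=(C_{ij})_{i\in1-w..N+w,\,j\in1..N}$ with $C_{ij}=A_{k+i,k+j}$ for some $k\in\mathbb{Z}$ (where $a..b=\{n\in\mathbb{Z}:a\le n\le b\}$); $A$ is self-contained if each such submatrix (for every $N$) occurs for infinitely many $k$. $\nu(A):=\inf\{\|Ax\|:\|x\|=1\}$; $\nu_N(A):=\inf\{\|Ax\|:\|x\|=1,\operatorname{diam}(\operatorname{supp}x)<N\}$. Convention: $\|A^{-1}\|:=\infty$ if $A$ is not invertible and $1/\infty=0$. *)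

theory Defs
  imports "HOL-Analysis.Analysis"
begin

text \<open>Operators on l2(Z) are represented by their matrices a :: int => int => complex.
  A band operator with band width w is a matrix with a i j = 0 for |i-j| > w and
  uniformly bounded entries (equivalently, a bounded operator on l2(Z) with banded matrix).\<close>

definition l2 :: "(int \<Rightarrow> complex) set" where
  "l2 = {x. (\<lambda>i. (cmod (x i))\<^sup>2) summable_on UNIV}"

definition l2norm :: "(int \<Rightarrow> complex) \<Rightarrow> real" where
  "l2norm x = sqrt (\<Sum>\<^sub>\<infinity>i. (cmod (x i))\<^sup>2)"

definition band_op :: "(int \<Rightarrow> int \<Rightarrow> complex) \<Rightarrow> nat \<Rightarrow> bool" where
  "band_op a w \<longleftrightarrow> (\<forall>i j. \<bar>i - j\<bar> > int w \<longrightarrow> a i j = 0) \<and> (\<exists>C. \<forall>i j. cmod (a i j) \<le> C)"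

definition op_apply :: "(int \<Rightarrow> int \<Rightarrow> complex) \<Rightarrow> (int \<Rightarrow> complex) \<Rightarrow> int \<Rightarrow> complex" where
  "op_apply a x i = (\<Sum>j\<in>{j. a i j \<noteq> 0}. a i j * x j)"

definition adjoint_op :: "(int \<Rightarrow> int \<Rightarrow> complex) \<Rightarrow> int \<Rightarrow> int \<Rightarrow> complex" where
  "adjoint_op a = (\<lambda>i j. cnj (a j i))"

definition self_contained :: "(int \<Rightarrow> int \<Rightarrow> complex) \<Rightarrow> nat \<Rightarrow> bool" where
  "self_contained a w \<longleftrightarrow>
     (\<forall>N::nat. \<forall>k::int. infinite {k'::int. \<forall>i\<in>{1 - int w..int N + int w}. \<forall>j\<in>{1..int N}.
        a (k' + i) (k' + j) = a (k + i) (k + j)})"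

definition nu :: "(int \<Rightarrow> int \<Rightarrow> complex) \<Rightarrow> real" where
  "nu a = Inf {l2norm (op_apply a x) | x. x \<in> l2 \<and> l2norm x = 1}"

definition diam_supp :: "(int \<Rightarrow> complex) \<Rightarrow> ereal" where
  "diam_supp x = (if finite {i. x i \<noteq> 0} then
       (if {i. x i \<noteq> 0} = {} then 0
        else ereal (real_of_int (Max {i. x i \<noteq> 0} - Min {i. x i \<noteq> 0})))
     else \<infinity>)"

definition nu_N :: "(int \<Rightarrow> int \<Rightarrow> complex) \<Rightarrow> nat \<Rightarrow> real" where
  "nu_N a N = Inf {l2norm (op_apply a x) | x. x \<in> l2 \<and> l2norm x = 1 \<and> diam_supp x < ereal (real N)}"

definition op_invertible :: "(int \<Rightarrow> int \<Rightarrow> complex) \<Rightarrow> bool" where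
  "op_invertible a \<longleftrightarrow> bij_betw (op_apply a) l2 l2"

definition inv_norm :: "(int \<Rightarrow> int \<Rightarrow> complex) \<Rightarrow> ereal" where
  "inv_norm a = (if op_invertible a then
      ereal (Sup {l2norm (inv_into l2 (op_apply a) y) | y. y \<in> l2 \<and> l2norm y = 1})
    else \<infinity>)"

end

theory Submission
  imports Defs
begin


definition sq :: "(int \<Rightarrow> complex) \<Rightarrow> int \<Rightarrow> real" where
  "sq x = (\<lambda>i. (cmod (x i))\<^sup>2)"

lemma sq_nonneg[simp]: "0 \<le> sq x i" by (simp add: sq_def)

definition N2 :: "(int \<Rightarrow> complex) \<Rightarrow> real" where
  "N2 x = infsum (sq x) UNIV"

lemma l2norm_N2: "l2norm x = sqrt (N2 x)"
  by (simp add: l2norm_def N2_def sq_def)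

lemma N2_nonneg: "0 \<le> N2 x"
  by (simp add: N2_def infsum_nonneg)

lemma l2norm_nonneg: "0 \<le> l2norm x"
  by (simp add: l2norm_N2 N2_nonneg)

lemma l2norm_sq: "(l2norm x)\<^sup>2 = N2 x"
  by (simp add: l2norm_N2 N2_nonneg)

lemma l2_sq: "x \<in> l2 \<longleftrightarrow> sq x summable_on UNIV"
  by (simp add: l2_def sq_def)

lemma L1: assumes "x \<in> l2" "finite F" shows "sum (sq x) F \<le> N2 x"
  unfolding N2_def using assms by (intro finite_sum_le_infsum) (auto simp: l2_sq)

lemma L2: assumes "\<And>F. finite F \<Longrightarrow> sum (sq x) F \<le> B"
  shows "x \<in> l2" "N2 x \<le> B"
proof -
  have "sq x summable_on UNIV"
    by (rule nonneg_bdd_above_summable_on) (use assms in \<open>auto intro!: bdd_aboveI\<close>)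
  then show "x \<in> l2" by (simp add: l2_sq)
  show "N2 x \<le> B" unfolding N2_def
    by (rule infsum_le_finite_sums) (use assms \<open>sq x summable_on UNIV\<close> in auto)
qed

lemma L4: assumes "x \<in> l2" "e > 0" shows "\<exists>F. finite F \<and> N2 x - e \<le> sum (sq x) F"
proof -
  from infsum_finite_approximation[of "sq x" UNIV e] assms
  obtain F where "finite F" "dist (sum (sq x) F) (N2 x) \<le> e"
    by (auto simp: l2_sq N2_def)
  then show ?thesis by (auto simp: dist_real_def)
qed

definition supp_in :: "(int \<Rightarrow> complex) \<Rightarrow> int set \<Rightarrow> bool" where
  "supp_in x S \<longleftrightarrow> (\<forall>i. i \<notin> S \<longrightarrow> x i = 0)"

lemma L5: assumes "finite S" "supp_in x S"
  shows "x \<in> l2" "N2 x = sum (sq x) S"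
proof -
  have *: "sum (sq x) F \<le> sum (sq x) S" if "finite F" for F
  proof -
    have "sum (sq x) F = sum (sq x) (F \<inter> S)"
      using that assms by (intro sum.mono_neutral_right) (auto simp: supp_in_def sq_def)
    also have "\<dots> \<le> sum (sq x) S" using assms by (intro sum_mono2) auto
    finally show ?thesis .
  qed
  show "x \<in> l2" using L2[OF *] by blast
  show "N2 x = sum (sq x) S" using L2(2)[OF *] L1[OF \<open>x \<in> l2\<close> assms(1)] by linarith
qed

lemma sq_add_le: "sqrt (sum (sq (\<lambda>i. x i + y i)) F) \<le> sqrt (sum (sq x) F) + sqrt (sum (sq y) F)"
proof -
  have "sqrt (sum (sq (\<lambda>i. x i + y i)) F) = L2_set (\<lambda>i. cmod (x i + y i)) F"
    by (simp add: L2_set_def sq_def)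
  also have "\<dots> \<le> L2_set (\<lambda>i. cmod (x i) + cmod (y i)) F"
    by (intro L2_set_mono norm_triangle_ineq) auto
  also have "\<dots> \<le> L2_set (\<lambda>i. cmod (x i)) F + L2_set (\<lambda>i. cmod (y i)) F"
    by (rule L2_set_triangle_ineq)
  finally show ?thesis by (simp add: L2_set_def sq_def)
qed

lemma l2_add: assumes "x \<in> l2" "y \<in> l2"
  shows "(\<lambda>i. x i + y i) \<in> l2" "l2norm (\<lambda>i. x i + y i) \<le> l2norm x + l2norm y"
proof -
  have *: "sum (sq (\<lambda>i. x i + y i)) F \<le> (l2norm x + l2norm y)\<^sup>2" if "finite F" for F
  proof -
    have "sqrt (sum (sq (\<lambda>i. x i + y i)) F) \<le> l2norm x + l2norm y"
    proof -
      have "sqrt (sum (sq x) F) \<le> l2norm x" unfolding l2norm_N2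
        using L1[OF assms(1) that] real_sqrt_le_mono by blast
      moreover have "sqrt (sum (sq y) F) \<le> l2norm y" unfolding l2norm_N2
        using L1[OF assms(2) that] real_sqrt_le_mono by blast
      ultimately show ?thesis using sq_add_le[of x y F] by linarith
    qed
    moreover have "0 \<le> sum (sq (\<lambda>i. x i + y i)) F" by (simp add: sum_nonneg)
    ultimately show ?thesis
      by (metis power_mono real_sqrt_ge_zero real_sqrt_pow2)
  qed
  show "(\<lambda>i. x i + y i) \<in> l2" using L2(1)[OF *] .
  show "l2norm (\<lambda>i. x i + y i) \<le> l2norm x + l2norm y"
  proof -
    have "l2norm (\<lambda>i. x i + y i) \<le> sqrt ((l2norm x + l2norm y)\<^sup>2)"
      unfolding l2norm_N2[of "\<lambda>i. x i + y i"] using L2(2)[OF *] real_sqrt_le_mono by blast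
    also have "\<dots> = l2norm x + l2norm y" by (simp add: l2norm_nonneg)
    finally show ?thesis .
  qed
qed

lemma l2_scale: assumes "x \<in> l2"
  shows "(\<lambda>i. c * x i) \<in> l2" "N2 (\<lambda>i. c * x i) = (cmod c)\<^sup>2 * N2 x"
    "l2norm (\<lambda>i. c * x i) = cmod c * l2norm x"
proof -
  have e: "sq (\<lambda>i. c * x i) = (\<lambda>i. (cmod c)\<^sup>2 * sq x i)"
    by (auto simp: sq_def norm_mult power_mult_distrib)
  have s: "sq x summable_on UNIV" using assms by (simp add: l2_sq)
  show "(\<lambda>i. c * x i) \<in> l2" unfolding l2_sq e using summable_on_cmult_right[OF s] by simp
  show "N2 (\<lambda>i. c * x i) = (cmod c)\<^sup>2 * N2 x" unfolding N2_def e
    by (rule infsum_cmult_right[OF s])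
  then show "l2norm (\<lambda>i. c * x i) = cmod c * l2norm x"
    by (simp add: l2norm_N2 real_sqrt_mult)
qed

lemma l2_minus: assumes "x \<in> l2" "y \<in> l2"
  shows "(\<lambda>i. x i - y i) \<in> l2"
  using l2_add(1)[OF assms(1) l2_scale(1)[OF assms(2), of "-1"]] by simp

lemma l2norm_minus_commute: "l2norm (\<lambda>i. x i - y i) = l2norm (\<lambda>i. y i - x i)"
proof -
  have "sq (\<lambda>i. x i - y i) = sq (\<lambda>i. y i - x i)"
    by (auto simp: sq_def norm_minus_commute)
  then show ?thesis by (simp add: l2norm_N2 N2_def)
qed

lemma l2_triangle_minus: assumes "x \<in> l2" "y \<in> l2" "z \<in> l2"
  shows "l2norm (\<lambda>i. x i - z i) \<le> l2norm (\<lambda>i. x i - y i) + l2norm (\<lambda>i. y i - z i)"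
  using l2_add(2)[OF l2_minus[OF assms(1,2)] l2_minus[OF assms(2,3)]] by simp

lemma l2_rev_triangle: assumes "x \<in> l2" "y \<in> l2"
  shows "\<bar>l2norm x - l2norm y\<bar> \<le> l2norm (\<lambda>i. x i - y i)"
proof -
  have 1: "l2norm x \<le> l2norm (\<lambda>i. x i - y i) + l2norm y"
    using l2_add(2)[OF l2_minus[OF assms] assms(2)] by simp
  have 2: "l2norm y \<le> l2norm (\<lambda>i. y i - x i) + l2norm x"
    using l2_add(2)[OF l2_minus[OF assms(2,1)] assms(1)] by simp
  show ?thesis using 1 2 l2norm_minus_commute[of x y] by linarith
qed

lemma l2norm_pt: assumes "x \<in> l2" shows "cmod (x i) \<le> l2norm x"
proof -
  have "sum (sq x) {i} \<le> N2 x" by (rule L1[OF assms]) simp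
  then show ?thesis by (simp add: sq_def l2norm_N2 real_le_rsqrt)
qed

lemma l2norm_zero: assumes "x \<in> l2" "l2norm x = 0" shows "x = (\<lambda>i. 0)"
  using l2norm_pt[OF assms(1)] assms(2) by (auto intro!: ext)



lemma l2I_bound: assumes "\<And>F. finite F \<Longrightarrow> sqrt (sum (sq y) F) \<le> B"
  shows "y \<in> l2" "l2norm y \<le> B"
proof -
  have B: "0 \<le> B" using assms[of "{}"] by simp
  have *: "sum (sq y) F \<le> B\<^sup>2" if "finite F" for F
    using assms[OF that] by (metis B power_mono real_sqrt_ge_zero real_sqrt_pow2 sum_nonneg sq_nonneg)
  show "y \<in> l2" using L2(1)[OF *] .
  have "l2norm y \<le> sqrt (B\<^sup>2)" unfolding l2norm_N2 using L2(2)[OF *] real_sqrt_le_mono by blast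
  then show "l2norm y \<le> B" using B by simp
qed

lemma fin_le_norm: assumes "x \<in> l2" "finite F" shows "sqrt (sum (sq x) F) \<le> l2norm x"
  unfolding l2norm_N2 using L1[OF assms] real_sqrt_le_mono by blast

lemma band_nz: assumes "band_op a w" "a i j \<noteq> 0" shows "j \<in> {i - int w..i + int w}"
proof -
  have "\<not> \<bar>i - j\<bar> > int w" using assms unfolding band_op_def by blast
  then show ?thesis by auto
qed

lemma band_fin: assumes "band_op a w" shows "finite {j. a i j \<noteq> 0}"
  by (rule finite_subset[of _ "{i - int w..i + int w}"]) (use band_nz[OF assms] in auto)

lemma op_apply_eq: assumes "band_op a w" "finite T" "\<And>j. j \<notin> T \<Longrightarrow> a i j * x j = 0"
  shows "op_apply a x i = (\<Sum>j\<in>T. a i j * x j)"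
proof -
  let ?U = "{j. a i j \<noteq> 0} \<union> T"
  have fU: "finite ?U" using band_fin[OF assms(1)] assms(2) by auto
  have "op_apply a x i = (\<Sum>j\<in>?U. a i j * x j)" unfolding op_apply_def
    by (rule sum.mono_neutral_left[OF fU]) auto
  also have "\<dots> = (\<Sum>j\<in>T. a i j * x j)"
    by (rule sum.mono_neutral_right[OF fU]) (use assms(3) in auto)
  finally show ?thesis .
qed

lemma op_apply_band: assumes "band_op a w"
  shows "op_apply a x i = (\<Sum>j\<in>{i - int w..i + int w}. a i j * x j)"
  by (rule op_apply_eq[OF assms]) (use band_nz[OF assms] in auto)

lemma op_add: "op_apply a (\<lambda>i. x i + y i) = (\<lambda>i. op_apply a x i + op_apply a y i)"
  by (auto simp: op_apply_def algebra_simps sum.distrib intro!: ext)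

lemma op_scale: "op_apply a (\<lambda>i. c * x i) = (\<lambda>i. c * op_apply a x i)"
  by (auto simp: op_apply_def algebra_simps sum_distrib_left intro!: ext)

lemma op_minus: "op_apply a (\<lambda>i. x i - y i) = (\<lambda>i. op_apply a x i - op_apply a y i)"
  by (auto simp: op_apply_def algebra_simps sum_subtractf intro!: ext)

lemma op_sum: "op_apply a (\<lambda>i. \<Sum>m\<in>M. f m i) = (\<lambda>i. \<Sum>m\<in>M. op_apply a (f m) i)"
  by (auto simp: op_apply_def sum_distrib_left intro!: ext sum.swap)

lemma op_zero: "op_apply a (\<lambda>i. 0) = (\<lambda>i. 0)"
  by (auto simp: op_apply_def intro!: ext)

lemma L2_set_sum_le: "finite D \<Longrightarrow> L2_set (\<lambda>i. \<Sum>d\<in>D. f d i) F \<le> (\<Sum>d\<in>D. L2_set (f d) F)"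
proof (induction D rule: finite_induct)
  case empty then show ?case by (simp add: L2_set_def)
next
  case (insert d D)
  have "L2_set (\<lambda>i. \<Sum>d\<in>insert d D. f d i) F = L2_set (\<lambda>i. f d i + (\<Sum>d\<in>D. f d i)) F"
    using insert by simp
  also have "\<dots> \<le> L2_set (f d) F + L2_set (\<lambda>i. \<Sum>d\<in>D. f d i) F"
    by (rule L2_set_triangle_ineq)
  finally show ?case using insert by simp
qed

lemma band_bound: assumes "band_op a w" obtains C where "C \<ge> 0" "\<And>i j. cmod (a i j) \<le> C"
  using assms unfolding band_op_def by (meson norm_ge_zero order.trans)

lemma L2_set_shift: "L2_set (\<lambda>i. f (i + d)) F = L2_set f ((\<lambda>i. i + d) ` F)" for d :: int
  by (simp add: L2_set_def sum.reindex inj_on_def)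

lemma op_bound: assumes "band_op a w" "\<And>i j. cmod (a i j) \<le> C" "x \<in> l2"
  shows "op_apply a x \<in> l2" "l2norm (op_apply a x) \<le> real (2 * w + 1) * C * l2norm x"
proof -
  have C: "C \<ge> 0" using assms(2) by (meson norm_ge_zero order.trans)
  let ?D = "{- int w..int w}"
  have *: "sqrt (sum (sq (op_apply a x)) F) \<le> real (2 * w + 1) * C * l2norm x" if F: "finite F" for F
  proof -
    have eq: "op_apply a x i = (\<Sum>d\<in>?D. a i (i + d) * x (i + d))" for i
    proof -
      have "op_apply a x i = (\<Sum>j\<in>{i - int w..i + int w}. a i j * x j)" by (rule op_apply_band[OF assms(1)])
      also have "\<dots> = (\<Sum>d\<in>?D. a i (i + d) * x (i + d))"
        by (rule sum.reindex_bij_witness[of _ "\<lambda>d. i + d" "\<lambda>j. j - i"]) auto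
      finally show ?thesis .
    qed
    have "sqrt (sum (sq (op_apply a x)) F) = L2_set (\<lambda>i. cmod (op_apply a x i)) F"
      by (simp add: L2_set_def sq_def)
    also have "\<dots> \<le> L2_set (\<lambda>i. \<Sum>d\<in>?D. cmod (a i (i + d) * x (i + d))) F"
      unfolding eq by (intro L2_set_mono norm_sum) auto
    also have "\<dots> \<le> (\<Sum>d\<in>?D. L2_set (\<lambda>i. cmod (a i (i + d) * x (i + d))) F)"
      by (rule L2_set_sum_le) simp
    also have "\<dots> \<le> (\<Sum>d\<in>?D. C * l2norm x)"
    proof (rule sum_mono)
      fix d assume "d \<in> ?D"
      have "L2_set (\<lambda>i. cmod (a i (i + d) * x (i + d))) F \<le> L2_set (\<lambda>i. C * cmod (x (i + d))) F"
        by (intro L2_set_mono) (auto simp: norm_mult intro!: mult_right_mono assms(2))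
      also have "\<dots> = C * L2_set (\<lambda>i. cmod (x (i + d))) F"
        using C by (simp add: L2_set_right_distrib)
      also have "L2_set (\<lambda>i. cmod (x (i + d))) F = L2_set (\<lambda>i. cmod (x i)) ((\<lambda>i. i + d) ` F)"
        by (rule L2_set_shift[where f = "\<lambda>i. cmod (x i)"])
      also have "\<dots> \<le> l2norm x"
        using fin_le_norm[OF assms(3), of "(\<lambda>i. i + d) ` F"] F by (simp add: L2_set_def sq_def)
      finally show "L2_set (\<lambda>i. cmod (a i (i + d) * x (i + d))) F \<le> C * l2norm x"
        using C by (simp add: mult_left_mono)
    qed
    also have "\<dots> = real (2 * w + 1) * C * l2norm x" by simp
    finally show ?thesis .
  qed
  show "op_apply a x \<in> l2" "l2norm (op_apply a x) \<le> real (2 * w + 1) * C * l2norm x"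
    using l2I_bound[OF *] by auto
qed

lemma adj_band: assumes "band_op a w" shows "band_op (adjoint_op a) w"
proof -
  from assms obtain C where C: "\<And>i j. cmod (a i j) \<le> C" and z: "\<And>i j. \<bar>i - j\<bar> > int w \<Longrightarrow> a i j = 0"
    unfolding band_op_def by blast
  have *: "\<bar>j - i\<bar> > int w" if "\<bar>i - j\<bar> > int w" for i j :: int using that by linarith
  show ?thesis unfolding band_op_def adjoint_op_def using C z * by fastforce
qed

lemma adj_adj[simp]: "adjoint_op (adjoint_op a) = a"
  by (simp add: adjoint_op_def)



definition ev :: "int \<Rightarrow> int \<Rightarrow> complex" where "ev k = (\<lambda>i. if i = k then 1 else 0)"

lemma ev_supp: "supp_in (ev k) {k}" by (simp add: supp_in_def ev_def)
lemma ev_l2: "ev k \<in> l2" using L5(1)[OF _ ev_supp] by simp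
lemma ev_norm: "l2norm (ev k) = 1" using L5(2)[OF _ ev_supp, of k] by (simp add: l2norm_N2 sq_def ev_def)

definition NS :: "(int \<Rightarrow> int \<Rightarrow> complex) \<Rightarrow> real set" where
  "NS a = {l2norm (op_apply a x) | x. x \<in> l2 \<and> l2norm x = 1}"

lemma nu_NS: "nu a = Inf (NS a)" by (simp add: nu_def NS_def)
lemma NS_ne: "NS a \<noteq> {}" using ev_l2 ev_norm unfolding NS_def by blast
lemma NS_bdd: "bdd_below (NS a)" unfolding NS_def by (rule bdd_belowI[of _ 0]) (auto simp: l2norm_nonneg)

lemma nu_le: "x \<in> l2 \<Longrightarrow> l2norm x = 1 \<Longrightarrow> nu a \<le> l2norm (op_apply a x)"
  unfolding nu_NS by (rule cInf_lower[OF _ NS_bdd]) (auto simp: NS_def)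

lemma nu_nonneg: "0 \<le> nu a"
  unfolding nu_NS by (rule cInf_greatest[OF NS_ne]) (auto simp: NS_def l2norm_nonneg)

lemma nu_approx: assumes "e > 0" shows "\<exists>x. x \<in> l2 \<and> l2norm x = 1 \<and> l2norm (op_apply a x) < nu a + e"
proof -
  have "Inf (NS a) < nu a + e" using assms by (simp add: nu_NS)
  then obtain t where "t \<in> NS a" "t < nu a + e" using cInf_less_iff[OF NS_ne NS_bdd] by blast
  then show ?thesis unfolding NS_def by blast
qed

lemma nu_below: assumes "band_op a w" "x \<in> l2" shows "nu a * l2norm x \<le> l2norm (op_apply a x)"
proof (cases "l2norm x = 0")
  case True then show ?thesis by (simp add: l2norm_nonneg)
next
  case False
  then have p: "l2norm x > 0" using l2norm_nonneg[of x] by linarith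
  obtain C where C: "\<And>i j. cmod (a i j) \<le> C" using band_bound[OF assms(1)] by blast
  define c where "c = complex_of_real (1 / l2norm x)"
  have cm: "cmod c = 1 / l2norm x" using p by (simp add: c_def norm_divide)
  have u: "(\<lambda>i. c * x i) \<in> l2" "l2norm (\<lambda>i. c * x i) = 1"
    using l2_scale[OF assms(2), of c] p cm by auto
  have "nu a \<le> l2norm (op_apply a (\<lambda>i. c * x i))" by (rule nu_le[OF u])
  also have "\<dots> = l2norm (op_apply a x) / l2norm x"
    unfolding op_scale using l2_scale(3)[OF op_bound(1)[OF assms(1) C assms(2)], of c] p cm by simp
  finally show ?thesis using p by (simp add: field_simps)
qed

definition trunc :: "nat \<Rightarrow> (int \<Rightarrow> complex) \<Rightarrow> int \<Rightarrow> complex" where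
  "trunc M x = (\<lambda>i. if i \<in> {- int M..int M} then x i else 0)"

lemma trunc_supp: "supp_in (trunc M x) {- int M..int M}" by (simp add: supp_in_def trunc_def)
lemma trunc_l2: "trunc M x \<in> l2" using L5(1)[OF _ trunc_supp] by simp

lemma trunc_conv: assumes "x \<in> l2" "e > 0"
  shows "\<exists>M0. \<forall>M\<ge>M0. l2norm (\<lambda>i. x i - trunc M x i) \<le> e"
proof -
  obtain F where F: "finite F" "N2 x - e\<^sup>2 \<le> sum (sq x) F" using L4[OF assms(1), of "e\<^sup>2"] assms(2) by auto
  define M0 where "M0 = nat (Max (insert 0 (abs ` F)))"
  have FM: "F \<subseteq> {- int M..int M}" if "M \<ge> M0" for M
  proof
    fix i assume "i \<in> F"
    then have "\<bar>i\<bar> \<le> Max (insert 0 (abs ` F))" using F(1) by (intro Max_ge) auto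
    then have "\<bar>i\<bar> \<le> int M0" unfolding M0_def by linarith
    then show "i \<in> {- int M..int M}" using that by auto
  qed
  have "l2norm (\<lambda>i. x i - trunc M x i) \<le> e" if M: "M \<ge> M0" for M
  proof -
    let ?y = "\<lambda>i. x i - trunc M x i"
    have "sum (sq ?y) H \<le> e\<^sup>2" if H: "finite H" for H
    proof -
      let ?H = "H - {- int M..int M}"
      have "sum (sq ?y) H = sum (sq x) ?H"
        using H by (intro sum.mono_neutral_cong_right) (auto simp: sq_def trunc_def)
      moreover have "sum (sq x) ?H + sum (sq x) F \<le> N2 x"
      proof -
        have "sum (sq x) ?H + sum (sq x) F = sum (sq x) (?H \<union> F)"
          using FM[OF M] H F(1) by (intro sum.union_disjoint[symmetric]) auto
        also have "\<dots> \<le> N2 x" using L1[OF assms(1)] H F(1) by auto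
        finally show ?thesis .
      qed
      ultimately show ?thesis using F(2) by linarith
    qed
    then have "N2 ?y \<le> e\<^sup>2" by (rule L2(2))
    then have "l2norm ?y \<le> sqrt (e\<^sup>2)" unfolding l2norm_N2 using real_sqrt_le_mono by blast
    then show ?thesis using assms(2) by simp
  qed
  then show ?thesis by blast
qed

lemma trunc_approx: assumes "band_op a w" "x \<in> l2" "l2norm x = 1" "e > 0"
  shows "\<exists>M u. supp_in u {- int M..int M} \<and> u \<in> l2 \<and> l2norm u = 1 \<and>
     l2norm (op_apply a u) < l2norm (op_apply a x) + e"
proof -
  obtain C where C: "\<And>i j. cmod (a i j) \<le> C" using band_bound[OF assms(1)] by blast
  have C0: "C \<ge> 0" using C by (meson norm_ge_zero order.trans)
  define K where "K = real (2 * w + 1) * C"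
  have K0: "K \<ge> 0" using C0 by (simp add: K_def)
  define t where "t = l2norm (op_apply a x)"
  have t0: "t \<ge> 0" by (simp add: t_def l2norm_nonneg)
  define d where "d = min (1/2) (e / (2 * (K + t + e)))"
  have d0: "d > 0" using assms(4) K0 t0 by (simp add: d_def)
  have d1: "d \<le> 1/2" unfolding d_def by (rule min.cobounded1)
  have d2: "d * (K + t + e) < e"
  proof -
    have "d * (K + t + e) \<le> e / (2 * (K + t + e)) * (K + t + e)"
      using K0 t0 assms(4) by (intro mult_right_mono) (auto simp: d_def)
    also have "\<dots> = e / 2" using K0 t0 assms(4) by (simp add: field_simps)
    finally show ?thesis using assms(4) by linarith
  qed
  obtain M0 where M0: "\<And>M. M \<ge> M0 \<Longrightarrow> l2norm (\<lambda>i. x i - trunc M x i) \<le> d"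
    using trunc_conv[OF assms(2) d0] by blast
  let ?v = "trunc M0 x"
  have vl2: "?v \<in> l2" by (rule trunc_l2)
  have dist: "l2norm (\<lambda>i. x i - ?v i) \<le> d" using M0 by simp
  have vn: "l2norm ?v \<ge> 1 - d" using l2_rev_triangle[OF assms(2) vl2] assms(3) dist by linarith
  have Av: "l2norm (op_apply a ?v) \<le> t + K * d"
  proof -
    have Al2: "op_apply a x \<in> l2" "op_apply a ?v \<in> l2" using op_bound(1)[OF assms(1) C] assms(2) vl2 by auto
    have "l2norm (op_apply a ?v) - t \<le> l2norm (\<lambda>i. op_apply a ?v i - op_apply a x i)"
      using l2_rev_triangle[OF Al2(2,1)] unfolding t_def by linarith
    also have "\<dots> = l2norm (op_apply a (\<lambda>i. ?v i - x i))" by (simp add: op_minus)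
    also have "\<dots> \<le> K * l2norm (\<lambda>i. ?v i - x i)"
      unfolding K_def by (rule op_bound(2)[OF assms(1) C l2_minus[OF vl2 assms(2)]])
    also have "\<dots> \<le> K * d" using dist l2norm_minus_commute[of ?v x] K0 by (simp add: mult_left_mono)
    finally show ?thesis by linarith
  qed
  have vp: "l2norm ?v > 0" using vn d1 by linarith
  define c where "c = complex_of_real (1 / l2norm ?v)"
  have cm: "cmod c = 1 / l2norm ?v" using vp by (simp add: c_def norm_divide)
  let ?u = "\<lambda>i. c * ?v i"
  have u: "?u \<in> l2" "l2norm ?u = 1" using l2_scale[OF vl2, of c] vp cm by auto
  have us: "supp_in ?u {- int M0..int M0}" using trunc_supp[of M0 x] by (simp add: supp_in_def)
  have "l2norm (op_apply a ?u) = l2norm (op_apply a ?v) / l2norm ?v"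
    unfolding op_scale using l2_scale(3)[OF op_bound(1)[OF assms(1) C vl2], of c] vp cm by simp
  also have "\<dots> \<le> (t + K * d) / (1 - d)"
    using Av vn vp d1 d0 K0 t0 by (intro frac_le) (auto simp: l2norm_nonneg)
  also have "\<dots> < t + e"
  proof -
    have "t + K * d < (t + e) * (1 - d)" using d2 by (simp add: algebra_simps)
    then show ?thesis using d1 by (simp add: field_simps)
  qed
  finally show ?thesis using u us unfolding t_def by blast
qed

lemma diam_supp_le: assumes "supp_in u {- int M..int M}" shows "diam_supp u \<le> ereal (2 * real M)"
proof -
  let ?S = "{i. u i \<noteq> 0}"
  have S: "?S \<subseteq> {- int M..int M}" using assms by (auto simp: supp_in_def)
  then have f: "finite ?S" by (rule finite_subset) simp
  show ?thesis
  proof (cases "?S = {}")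
    case True then show ?thesis using f by (simp add: diam_supp_def)
  next
    case False
    have "Max ?S \<le> int M" using S False f by (meson Max_in atLeastAtMost_iff subsetD)
    moreover have "Min ?S \<ge> - int M" using S False f by (meson Min_in atLeastAtMost_iff subsetD)
    ultimately have "real_of_int (Max ?S - Min ?S) \<le> 2 * real M" by linarith
    then show ?thesis using f False by (simp only: diam_supp_def if_True if_False ereal_less_eq(3))
  qed
qed

definition NSN :: "(int \<Rightarrow> int \<Rightarrow> complex) \<Rightarrow> nat \<Rightarrow> real set" where
  "NSN a N = {l2norm (op_apply a x) | x. x \<in> l2 \<and> l2norm x = 1 \<and> diam_supp x < ereal (real N)}"

lemma nuN_NSN: "nu_N a N = Inf (NSN a N)" by (simp add: nu_N_def NSN_def)

lemma NSN_ne: "N \<ge> 1 \<Longrightarrow> NSN a N \<noteq> {}"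
proof -
  assume "N \<ge> 1"
  have "diam_supp (ev 0) \<le> ereal (2 * real 0)" by (rule diam_supp_le) (simp add: supp_in_def ev_def)
  then have "diam_supp (ev 0) < ereal (real N)" using \<open>N \<ge> 1\<close>
    by (metis ereal_less_eq(3) le_less_trans less_numeral_extra(1) mult_zero_right of_nat_0 of_nat_0_less_iff order_less_le_trans linorder_not_less le_zero_eq not_one_le_zero)
  then show ?thesis using ev_l2 ev_norm unfolding NSN_def by blast
qed

lemma NSN_sub: "NSN a N \<subseteq> NS a" by (auto simp: NSN_def NS_def)
lemma NSN_mono: assumes "N \<le> N'" shows "NSN a N \<subseteq> NSN a N'"
proof
  fix t assume "t \<in> NSN a N"
  then obtain x where x: "t = l2norm (op_apply a x)" "x \<in> l2" "l2norm x = 1" "diam_supp x < ereal (real N)"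
    unfolding NSN_def by blast
  have "ereal (real N) \<le> ereal (real N')" using assms by simp
  then have "diam_supp x < ereal (real N')" using x(4) by (rule order_less_le_trans[rotated])
  then show "t \<in> NSN a N'" using x unfolding NSN_def by blast
qed

lemma nuN_mono: "1 \<le> N \<Longrightarrow> N \<le> N' \<Longrightarrow> nu_N a N' \<le> nu_N a N"
  unfolding nuN_NSN
  by (rule cInf_superset_mono[OF NSN_ne _ NSN_mono]) (auto intro: bdd_below_mono[OF NS_bdd NSN_sub])

lemma nu_le_nuN: "1 \<le> N \<Longrightarrow> nu a \<le> nu_N a N"
  unfolding nuN_NSN nu_NS by (rule cInf_superset_mono[OF NSN_ne NS_bdd NSN_sub])

lemma nuN_conv: assumes "band_op a w" shows "(\<lambda>N. nu_N a N) \<longlonglongrightarrow> nu a"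
proof (rule LIMSEQ_I)
  fix r :: real assume r: "r > 0"
  obtain x where x: "x \<in> l2" "l2norm x = 1" "l2norm (op_apply a x) < nu a + r/2"
    using nu_approx[of "r/2" a] r by auto
  obtain M u where u: "supp_in u {- int M..int M}" "u \<in> l2" "l2norm u = 1"
     "l2norm (op_apply a u) < l2norm (op_apply a x) + r/2"
    using trunc_approx[OF assms x(1,2), of "r/2"] r by auto
  have "norm (nu_N a N - nu a) < r" if N: "N \<ge> 2 * M + 1" for N
  proof -
    have "diam_supp u \<le> ereal (2 * real M)" by (rule diam_supp_le[OF u(1)])
    also have "\<dots> < ereal (real N)" using N by simp
    finally have "l2norm (op_apply a u) \<in> NSN a N" using u unfolding NSN_def by blast
    then have "nu_N a N \<le> l2norm (op_apply a u)" unfolding nuN_NSN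
      by (rule cInf_lower) (rule bdd_below_mono[OF NS_bdd NSN_sub])
    moreover have "nu a \<le> nu_N a N" by (rule nu_le_nuN) (use N in simp)
    ultimately show ?thesis using x(3) u(4) by simp
  qed
  then show "\<exists>no. \<forall>n\<ge>no. norm (nu_N a n - nu a) < r" by blast
qed



definition recur :: "(int \<Rightarrow> int \<Rightarrow> complex) \<Rightarrow> int \<Rightarrow> int \<Rightarrow> bool" where
  "recur a R k \<longleftrightarrow> (\<forall>i j. \<bar>i\<bar> \<le> R \<longrightarrow> \<bar>j\<bar> \<le> R \<longrightarrow> a (k + i) (k + j) = a i j)"

definition far_rec :: "(int \<Rightarrow> int \<Rightarrow> complex) \<Rightarrow> bool" where
  "far_rec a \<longleftrightarrow> (\<forall>R L. \<exists>k. \<bar>k\<bar> > L \<and> recur a R k)"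

lemma recur_adj: "recur a R k \<Longrightarrow> recur (adjoint_op a) R k"
  by (simp add: recur_def adjoint_op_def)

lemma far_rec_adj: "far_rec a \<Longrightarrow> far_rec (adjoint_op a)"
  unfolding far_rec_def using recur_adj by blast

lemma sc_far_rec: assumes "self_contained a w" shows "far_rec a"
  unfolding far_rec_def
proof (intro allI)
  fix R L :: int
  show "\<exists>k. \<bar>k\<bar> > L \<and> recur a R k"
  proof (cases "R < 0")
    case True
    then have "recur a R (\<bar>L\<bar> + 1)" by (auto simp: recur_def)
    then show ?thesis by (intro exI[of _ "\<bar>L\<bar> + 1"]) auto
  next
    case False
    define N where "N = nat (2 * R + 1)"
    define k0 where "k0 = - R - 1"
    let ?S = "{k'::int. \<forall>i\<in>{1 - int w..int N + int w}. \<forall>j\<in>{1..int N}.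
        a (k' + i) (k' + j) = a (k0 + i) (k0 + j)}"
    have inf: "infinite ?S" using assms unfolding self_contained_def by blast
    have "infinite ((\<lambda>k'. k' + R + 1) ` ?S)"
      using inf by (subst finite_image_iff) (auto simp: inj_on_def)
    then have "\<not> (\<lambda>k'. k' + R + 1) ` ?S \<subseteq> {-L..L}" using finite_subset by blast
    then obtain k' where k': "k' \<in> ?S" "k' + R + 1 \<notin> {-L..L}" by blast
    have "recur a R (k' + R + 1)" unfolding recur_def
    proof (intro allI impI)
      fix i j :: int assume ij: "\<bar>i\<bar> \<le> R" "\<bar>j\<bar> \<le> R"
      have "i + R + 1 \<in> {1 - int w..int N + int w}" "j + R + 1 \<in> {1..int N}"
        using ij False by (auto simp: N_def)
      then have "a (k' + (i + R + 1)) (k' + (j + R + 1)) = a (k0 + (i + R + 1)) (k0 + (j + R + 1))"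
        using k'(1) by blast
      then show "a (k' + R + 1 + i) (k' + R + 1 + j) = a i j"
        by (simp add: k0_def algebra_simps)
    qed
    moreover have "\<bar>k' + R + 1\<bar> > L" using k'(2) by auto
    ultimately show ?thesis by blast
  qed
qed

definition shift :: "int \<Rightarrow> (int \<Rightarrow> complex) \<Rightarrow> int \<Rightarrow> complex" where
  "shift k x = (\<lambda>i. x (i - k))"

lemma shift_supp: "supp_in x {- int M..int M} \<Longrightarrow> supp_in (shift k x) {k - int M..k + int M}"
  by (auto simp: supp_in_def shift_def)

lemma shift_N2: assumes "supp_in x {- int M..int M}"
  shows "shift k x \<in> l2" "N2 (shift k x) = N2 x"
proof -
  have s: "supp_in (shift k x) {k - int M..k + int M}" by (rule shift_supp[OF assms])
  show "shift k x \<in> l2" using L5(1)[OF _ s] by simp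
  have "N2 (shift k x) = sum (sq (shift k x)) {k - int M..k + int M}" using L5(2)[OF _ s] by simp
  also have "\<dots> = sum (sq x) {- int M..int M}"
    by (rule sum.reindex_bij_witness[of _ "\<lambda>i. i + k" "\<lambda>i. i - k"]) (auto simp: sq_def shift_def)
  also have "\<dots> = N2 x" using L5(2)[OF _ assms] by simp
  finally show "N2 (shift k x) = N2 x" .
qed

lemma op_supp: assumes "band_op a w" "supp_in x {- int M..int M}"
  shows "supp_in (op_apply a x) {- int (M + w)..int (M + w)}"
  unfolding supp_in_def
proof (intro allI impI)
  fix i assume i: "i \<notin> {- int (M + w)..int (M + w)}"
  have "op_apply a x i = (\<Sum>j\<in>{- int M..int M}. a i j * x j)"
    by (rule op_apply_eq[OF assms(1)]) (use assms(2) in \<open>auto simp: supp_in_def\<close>)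
  also have "\<dots> = 0"
  proof (rule sum.neutral, rule ballI)
    fix j assume "j \<in> {- int M..int M}"
    then have "a i j = 0" using i assms(1) band_nz by fastforce
    then show "a i j * x j = 0" by simp
  qed
  finally show "op_apply a x i = 0" .
qed

lemma shift_op: assumes "band_op a w" "recur a (int M + int w) k" "supp_in x {- int M..int M}"
  shows "op_apply a (shift k x) = shift k (op_apply a x)"
proof
  fix i
  have L: "op_apply a (shift k x) i = (\<Sum>j\<in>{k - int M..k + int M}. a i j * x (j - k))"
  proof -
    have "op_apply a (shift k x) i = (\<Sum>j\<in>{k - int M..k + int M}. a i j * shift k x j)"
      by (rule op_apply_eq[OF assms(1)]) (use assms(3) in \<open>auto simp: supp_in_def shift_def\<close>)
    then show ?thesis by (simp add: shift_def)
  qed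
  have R: "op_apply a x (i - k) = (\<Sum>j\<in>{- int M..int M}. a (i - k) j * x j)"
    by (rule op_apply_eq[OF assms(1)]) (use assms(3) in \<open>auto simp: supp_in_def\<close>)
  show "op_apply a (shift k x) i = shift k (op_apply a x) i"
  proof (cases "\<bar>i - k\<bar> \<le> int M + int w")
    case True
    have "op_apply a (shift k x) i = (\<Sum>j\<in>{- int M..int M}. a (k + (i - k)) (k + j) * x j)"
      unfolding L by (rule sum.reindex_bij_witness[of _ "\<lambda>j. j + k" "\<lambda>j. j - k"]) auto
    also have "\<dots> = (\<Sum>j\<in>{- int M..int M}. a (i - k) j * x j)"
      using assms(2) True by (intro sum.cong) (auto simp: recur_def)
    finally show ?thesis using R by (simp add: shift_def)
  next
    case False
    have "op_apply a (shift k x) i = 0" unfolding L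
    proof (rule sum.neutral, rule ballI)
      fix j assume "j \<in> {k - int M..k + int M}"
      then have "a i j = 0" using False assms(1) band_nz by fastforce
      then show "a i j * x (j - k) = 0" by simp
    qed
    moreover have "op_apply a x (i - k) = 0" unfolding R
    proof (rule sum.neutral, rule ballI)
      fix j assume "j \<in> {- int M..int M}"
      then have "a (i - k) j = 0" using False assms(1) band_nz by fastforce
      then show "a (i - k) j * x j = 0" by simp
    qed
    ultimately show ?thesis by (simp add: shift_def)
  qed
qed

lemma copy_seq: fixes R :: "nat \<Rightarrow> int" assumes "far_rec a" "\<And>m. R m \<ge> 0"
  obtains k :: "nat \<Rightarrow> int" where "\<And>m. recur a (R m) (k m)" "\<And>l m. l < m \<Longrightarrow> \<bar>k m\<bar> > \<bar>k l\<bar> + R m + R l"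
proof -
  define g where "g = (\<lambda>R L. SOME k. \<bar>k\<bar> > L \<and> recur a R k)"
  have g: "\<bar>g R L\<bar> > L \<and> recur a R (g R L)" for R L
    unfolding g_def by (rule someI_ex) (use assms(1) in \<open>auto simp: far_rec_def\<close>)
  define S where "S = (\<lambda>m. \<Sum>l\<le>m. R l)"
  have S: "R l \<le> S m" if "l \<le> m" for l m
    unfolding S_def using that assms(2) by (intro member_le_sum) auto
  define k where "k = rec_nat (g (R 0) 0) (\<lambda>m km. g (R (Suc m)) (\<bar>km\<bar> + R (Suc m) + S m))"
  have k0: "k 0 = g (R 0) 0" by (simp add: k_def)
  have kS: "k (Suc m) = g (R (Suc m)) (\<bar>k m\<bar> + R (Suc m) + S m)" for m by (simp add: k_def)
  have rk: "recur a (R m) (k m)" for m by (cases m) (use g k0 kS in auto)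
  have step: "\<bar>k (Suc m)\<bar> > \<bar>k m\<bar> + R (Suc m) + S m" for m using g kS by metis
  have main: "\<forall>l<m. \<bar>k m\<bar> > \<bar>k l\<bar> + R m + R l" for m
  proof (induction m)
    case 0 then show ?case by simp
  next
    case (Suc m)
    show ?case
    proof (intro allI impI)
      fix l assume l: "l < Suc m"
      show "\<bar>k (Suc m)\<bar> > \<bar>k l\<bar> + R (Suc m) + R l"
      proof (cases "l = m")
        case True then show ?thesis using step[of m] S[of m m] by simp
      next
        case False
        then have "l < m" using l by simp
        then have "\<bar>k m\<bar> > \<bar>k l\<bar> + R m + R l" using Suc by blast
        then show ?thesis using step[of m] S[of m m] assms(2)[of m] assms(2)[of "Suc m"] by linarith
      qed
    qed
  qed
  show ?thesis using that rk main by blast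
qed

lemma copy_disj: fixes km kl Rm Rl :: int assumes "\<bar>km\<bar> > \<bar>kl\<bar> + Rm + Rl"
  shows "{km - Rm..km + Rm} \<inter> {kl - Rl..kl + Rl} = {}"
proof (rule ccontr)
  assume "{km - Rm..km + Rm} \<inter> {kl - Rl..kl + Rl} \<noteq> {}"
  then obtain x where "x \<in> {km - Rm..km + Rm}" "x \<in> {kl - Rl..kl + Rl}" by blast
  then have x: "km - Rm \<le> x" "x \<le> km + Rm" "kl - Rl \<le> x" "x \<le> kl + Rl" by auto
  then have "\<bar>km - kl\<bar> \<le> Rm + Rl" unfolding abs_le_iff by linarith
  moreover have "\<bar>km\<bar> \<le> \<bar>kl\<bar> + \<bar>km - kl\<bar>" by (metis abs_triangle_ineq add.commute diff_add_cancel)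
  ultimately show False using assms by linarith
qed

lemma homog: fixes M :: "'a \<Rightarrow> 'b \<Rightarrow> 'c::field"
  assumes "finite R" "finite J" "card R < card J"
  shows "\<exists>c. (\<forall>j. j \<notin> J \<longrightarrow> c j = 0) \<and> (\<exists>j\<in>J. c j \<noteq> 0) \<and> (\<forall>r\<in>R. (\<Sum>j\<in>J. M r j * c j) = 0)"
  using assms
proof (induction R arbitrary: J M rule: finite_induct)
  case empty
  then obtain j0 where "j0 \<in> J" by fastforce
  then show ?case by (intro exI[of _ "\<lambda>j. if j = j0 then 1 else 0"]) auto
next
  case (insert r R)
  show ?case
  proof (cases "\<forall>j\<in>J. M r j = 0")
    case True
    obtain c where c: "\<forall>j. j \<notin> J \<longrightarrow> c j = 0" "\<exists>j\<in>J. c j \<noteq> 0" "\<forall>q\<in>R. (\<Sum>j\<in>J. M q j * c j) = 0"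
      using insert.IH[of J M] insert.prems insert.hyps by auto
    show ?thesis using c True by (intro exI[of _ c]) auto
  next
    case False
    then obtain j0 where j0: "j0 \<in> J" "M r j0 \<noteq> 0" by blast
    define M' where "M' = (\<lambda>q j. M q j - M q j0 / M r j0 * M r j)"
    have "card R < card (J - {j0})" using insert.prems insert.hyps j0 by (simp add: card_Diff_singleton)
    then obtain c' where c': "\<forall>j. j \<notin> J - {j0} \<longrightarrow> c' j = 0" "\<exists>j\<in>J - {j0}. c' j \<noteq> 0"
        "\<forall>q\<in>R. (\<Sum>j\<in>J - {j0}. M' q j * c' j) = 0"
      using insert.IH[of "J - {j0}" M'] insert.prems by auto
    define s where "s = (\<Sum>j\<in>J - {j0}. M r j * c' j)"
    define c where "c = c'(j0 := - s / M r j0)"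
    have fin: "finite (J - {j0})" using insert.prems by simp
    have sumc: "(\<Sum>j\<in>J. f j * c j) = (\<Sum>j\<in>J - {j0}. f j * c' j) + f j0 * (- s / M r j0)" for f
    proof -
      have "(\<Sum>j\<in>J. f j * c j) = f j0 * c j0 + (\<Sum>j\<in>J - {j0}. f j * c j)"
        using insert.prems j0 by (simp add: sum.remove)
      also have "(\<Sum>j\<in>J - {j0}. f j * c j) = (\<Sum>j\<in>J - {j0}. f j * c' j)"
        by (intro sum.cong) (auto simp: c_def)
      finally show ?thesis by (simp add: c_def)
    qed
    have "(\<forall>j. j \<notin> J \<longrightarrow> c j = 0)" using c'(1) j0 by (auto simp: c_def)
    moreover have "\<exists>j\<in>J. c j \<noteq> 0" using c'(2) by (auto simp: c_def)
    moreover have "\<forall>q\<in>insert r R. (\<Sum>j\<in>J. M q j * c j) = 0"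
    proof
      fix q assume q: "q \<in> insert r R"
      show "(\<Sum>j\<in>J. M q j * c j) = 0"
      proof (cases "q = r")
        case True
        then show ?thesis unfolding sumc using j0 by (simp add: s_def field_simps)
      next
        case False
        then have qR: "q \<in> R" using q by simp
        have "(\<Sum>j\<in>J - {j0}. M' q j * c' j) = (\<Sum>j\<in>J - {j0}. M q j * c' j) - M q j0 / M r j0 * s"
          unfolding M'_def s_def by (simp add: algebra_simps sum_subtractf sum_distrib_left)
        then have "(\<Sum>j\<in>J - {j0}. M q j * c' j) = M q j0 / M r j0 * s" using c'(3) qR by simp
        then show ?thesis unfolding sumc using j0 by (simp add: field_simps)
      qed
    qed
    ultimately show ?thesis by blast
  qed
qed

lemma disj_N2: assumes "finite Ms" "\<And>m. m \<in> Ms \<Longrightarrow> finite (W m)" "\<And>m. m \<in> Ms \<Longrightarrow> supp_in (u m) (W m)"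
  "\<And>l m. l \<in> Ms \<Longrightarrow> m \<in> Ms \<Longrightarrow> l \<noteq> m \<Longrightarrow> W l \<inter> W m = {}"
  shows "N2 (\<lambda>r. \<Sum>m\<in>Ms. u m r) = (\<Sum>m\<in>Ms. N2 (u m))"
proof -
  let ?U = "\<Union>m\<in>Ms. W m"
  let ?z = "\<lambda>r. \<Sum>m\<in>Ms. u m r"
  have fU: "finite ?U" using assms(1,2) by auto
  have zs: "supp_in ?z ?U" using assms(3) by (auto simp: supp_in_def intro!: sum.neutral)
  have zW: "?z r = u m r" if "m \<in> Ms" "r \<in> W m" for m r
  proof -
    have "?z r = u m r + (\<Sum>l\<in>Ms - {m}. u l r)" using assms(1) that(1) by (simp add: sum.remove)
    also have "(\<Sum>l\<in>Ms - {m}. u l r) = 0"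
      using assms(3,4) that by (intro sum.neutral) (force simp: supp_in_def)
    finally show ?thesis by simp
  qed
  have "N2 ?z = sum (sq ?z) ?U" using L5(2)[OF fU zs] .
  also have "\<dots> = (\<Sum>m\<in>Ms. sum (sq ?z) (W m))"
    using assms(1,2,4) by (intro sum.UNION_disjoint) auto
  also have "\<dots> = (\<Sum>m\<in>Ms. sum (sq (u m)) (W m))"
    by (intro sum.cong refl) (auto simp: sq_def zW)
  also have "\<dots> = (\<Sum>m\<in>Ms. N2 (u m))"
    by (intro sum.cong refl) (simp add: L5(2)[OF assms(2) assms(3)])
  finally show ?thesis .
qed



lemma Re_mult_cnj: "Re (z * cnj z) = (cmod z)\<^sup>2"
  unfolding cmod_power2 by (simp add: power2_eq_square)

lemma core_fin:
  fixes b :: "int \<Rightarrow> int \<Rightarrow> complex" and M :: nat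
  assumes band: "band_op b w" and fr: "far_rec b"
    and low: "\<And>x. x \<in> l2 \<Longrightarrow> c * l2norm x \<le> l2norm (op_apply b x)" and c: "c > 0"
    and ys: "supp_in y {- int M..int M}"
  shows "c * l2norm y \<le> l2norm (op_apply (adjoint_op b) y)"
proof (cases "l2norm y = 0")
  case True then show ?thesis by (simp add: l2norm_nonneg)
next
  case False
  let ?B = "adjoint_op b"
  have bandB: "band_op ?B w" by (rule adj_band[OF band])
  obtain C where C: "\<And>i j. cmod (b i j) \<le> C" using band_bound[OF band] by blast
  have CB: "\<And>i j. cmod (?B i j) \<le> C" using C by (simp add: adjoint_op_def)
  define n where "n = 2 * w + 1"
  define R where "R = int M + int w"
  have R0: "R \<ge> 0" by (simp add: R_def)
  obtain k :: "nat \<Rightarrow> int" where rk: "\<And>m. recur b R (k m)"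
      and kd: "\<And>l m. l < m \<Longrightarrow> \<bar>k m\<bar> > \<bar>k l\<bar> + R + R"
    using copy_seq[OF fr, of "\<lambda>_. R"] R0 by blast
  have rkB: "\<And>m. recur ?B (int M + int w) (k m)" using rk recur_adj unfolding R_def by blast
  define z where "z = (\<lambda>m. shift (k m) y)"
  define W where "W = (\<lambda>m. {k m - R..k m + R})"
  have disj: "W l \<inter> W m = {}" if "l \<noteq> m" for l m
  proof (cases "l < m")
    case True then show ?thesis unfolding W_def using copy_disj[OF kd[OF True]] by blast
  next
    case False then have "m < l" using that by simp
    then show ?thesis unfolding W_def using copy_disj[OF kd[of m l]] by blast
  qed
  have fW: "finite (W m)" for m by (simp add: W_def)
  have zs: "supp_in (z m) (W m)" for m
    using shift_supp[OF ys, of "k m"] unfolding z_def W_def R_def supp_in_def by auto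
  have zl2: "z m \<in> l2" "N2 (z m) = N2 y" for m using shift_N2[OF ys] unfolding z_def by auto
  have Bys: "supp_in (op_apply ?B y) {- int (M + w)..int (M + w)}" by (rule op_supp[OF bandB ys])
  have Bz: "op_apply ?B (z m) = shift (k m) (op_apply ?B y)" for m
    unfolding z_def by (rule shift_op[OF bandB rkB ys])
  define L where "L = (\<Sum>m<n. \<bar>k m\<bar>) + R"
  have WI: "W m \<subseteq> {-L..L}" if "m < n" for m
  proof -
    have "\<bar>k m\<bar> \<le> (\<Sum>m<n. \<bar>k m\<bar>)" using that by (intro member_le_sum) auto
    then show ?thesis unfolding W_def L_def by auto
  qed
  have L0: "L \<ge> 0" using R0 by (simp add: L_def sum_nonneg)
  define I1 where "I1 = {-L..L}"
  define I2 where "I2 = {-L - int w..L + int w}"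
  define J :: "(int + nat) set" where "J = Inl ` I1 \<union> Inr ` {..<n}"
  have fI1: "finite I1" "finite I2" by (auto simp: I1_def I2_def)
  have cJ: "card J = card I1 + n"
    unfolding J_def by (subst card_Un_disjoint) (auto simp: card_image fI1)
  have cI: "card I2 < card J" unfolding cJ using L0 by (simp add: I1_def I2_def n_def)
  define Mx where "Mx = (\<lambda>r j. case j of Inl i \<Rightarrow> b r i | Inr m \<Rightarrow> - z m r)"
  obtain cc where cc0: "\<forall>j. j \<notin> J \<longrightarrow> cc j = 0" and ccnz: "\<exists>j\<in>J. cc j \<noteq> 0"
      and ccs: "\<forall>r\<in>I2. (\<Sum>j\<in>J. Mx r j * cc j) = 0"
    using homog[OF fI1(2) _ cI, of Mx] by (auto simp: J_def fI1)
  define x where "x = (\<lambda>i. cc (Inl i))"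
  define co where "co = (\<lambda>m. cc (Inr m))"
  define zz where "zz = (\<lambda>r. \<Sum>m<n. co m * z m r)"
  have xs: "supp_in x I1" using cc0 unfolding supp_in_def x_def J_def by auto
  have xl2: "x \<in> l2" using L5(1)[OF fI1(1) xs] .
  have Axe: "op_apply b x r = (\<Sum>i\<in>I1. b r i * x i)" for r
    by (rule op_apply_eq[OF band fI1(1)]) (use xs in \<open>auto simp: supp_in_def\<close>)
  have zzI: "supp_in zz I1"
  proof -
    have "z m r = 0" if "m < n" "r \<notin> I1" for m r
      using zs[of m] WI[OF that(1)] that(2) unfolding supp_in_def I1_def by blast
    then show ?thesis unfolding supp_in_def zz_def by (auto intro!: sum.neutral)
  qed
  have Ax: "op_apply b x = zz"
  proof
    fix r
    show "op_apply b x r = zz r"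
    proof (cases "r \<in> I2")
      case True
      have "(\<Sum>j\<in>J. Mx r j * cc j) = (\<Sum>j\<in>Inl ` I1. Mx r j * cc j) + (\<Sum>j\<in>Inr ` {..<n}. Mx r j * cc j)"
        unfolding J_def by (rule sum.union_disjoint) (auto simp: fI1)
      also have "(\<Sum>j\<in>Inl ` I1. Mx r j * cc j) = (\<Sum>i\<in>I1. b r i * x i)"
        by (subst sum.reindex) (auto simp: inj_on_def Mx_def x_def)
      also have "(\<Sum>j\<in>Inr ` {..<n}. Mx r j * cc j) = - zz r"
        by (subst sum.reindex) (auto simp: inj_on_def Mx_def co_def zz_def sum_negf algebra_simps)
      finally have "(\<Sum>i\<in>I1. b r i * x i) = zz r" using ccs True by simp
      then show ?thesis using Axe by simp
    next
      case False
      have "b r i = 0" if "i \<in> I1" for i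
      proof -
        have "\<bar>r - i\<bar> > int w" using False that by (auto simp: I1_def I2_def)
        then show ?thesis using band unfolding band_op_def by blast
      qed
      then have "op_apply b x r = 0" unfolding Axe by simp
      moreover have "zz r = 0" using zzI False unfolding supp_in_def I1_def I2_def by auto
      ultimately show ?thesis by simp
    qed
  qed
  have co_nz: "\<exists>m<n. co m \<noteq> 0"
  proof (rule ccontr)
    assume "\<not> (\<exists>m<n. co m \<noteq> 0)"
    then have "zz = (\<lambda>r. 0)" unfolding zz_def by auto
    then have "op_apply b x = (\<lambda>r. 0)" using Ax by simp
    then have "c * l2norm x \<le> 0" using low[OF xl2] by (simp add: l2norm_N2 N2_def sq_def)
    then have "l2norm x = 0" using c l2norm_nonneg[of x] by (simp add: mult_le_0_iff)
    then have "x = (\<lambda>i. 0)" using l2norm_zero[OF xl2] by simp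
    then have "\<forall>j\<in>J. cc j = 0" using \<open>\<not> (\<exists>m<n. co m \<noteq> 0)\<close> unfolding J_def x_def co_def by (auto dest: fun_cong)
    then show False using ccnz by blast
  qed
  define P where "P = (\<Sum>m<n. (cmod (co m))\<^sup>2)"
  have P0: "P > 0"
  proof -
    obtain m where "m < n" "co m \<noteq> 0" using co_nz by blast
    then have "(cmod (co m))\<^sup>2 \<le> P" unfolding P_def by (intro member_le_sum) auto
    moreover have "(cmod (co m))\<^sup>2 > 0" using \<open>co m \<noteq> 0\<close> by simp
    ultimately show ?thesis by linarith
  qed
  have N2zz: "N2 zz = P * N2 y"
  proof -
    have "N2 zz = (\<Sum>m<n. N2 (\<lambda>r. co m * z m r))"
      unfolding zz_def
    proof (rule disj_N2[where W = W])
      show "supp_in (\<lambda>r. co m * z m r) (W m)" for m using zs[of m] by (simp add: supp_in_def)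
    qed (auto simp: fW disj)
    also have "\<dots> = (\<Sum>m<n. (cmod (co m))\<^sup>2 * N2 y)"
      using l2_scale(2)[OF zl2(1)] zl2(2) by simp
    finally show ?thesis by (simp add: P_def sum_distrib_right)
  qed
  have N2Bzz: "N2 (op_apply ?B zz) = P * N2 (op_apply ?B y)"
  proof -
    have BS: "supp_in (shift (k m) (op_apply ?B y)) (W m)" for m
      using shift_supp[OF Bys, of "k m"] unfolding W_def R_def by simp
    have e: "op_apply ?B zz = (\<lambda>r. \<Sum>m<n. co m * shift (k m) (op_apply ?B y) r)"
      unfolding zz_def op_sum op_scale Bz ..
    have "N2 (op_apply ?B zz) = (\<Sum>m<n. N2 (\<lambda>r. co m * shift (k m) (op_apply ?B y) r))"
      unfolding e
    proof (rule disj_N2[where W = W])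
      show "supp_in (\<lambda>r. co m * shift (k m) (op_apply ?B y) r) (W m)" for m
        using BS[of m] by (simp add: supp_in_def)
    qed (auto simp: fW disj)
    also have "\<dots> = (\<Sum>m<n. (cmod (co m))\<^sup>2 * N2 (op_apply ?B y))"
      using l2_scale(2)[OF shift_N2(1)[OF Bys]] shift_N2(2)[OF Bys] by simp
    finally show ?thesis by (simp add: P_def sum_distrib_right)
  qed
  have zzl2: "zz \<in> l2" using L5(1)[OF fI1(1) zzI] .
  have Bzzl2: "op_apply ?B zz \<in> l2" by (rule op_bound(1)[OF bandB CB zzl2])
  have ip: "N2 zz \<le> l2norm (op_apply ?B zz) * l2norm x"
  proof -
    have e1: "op_apply ?B zz i = (\<Sum>r\<in>I1. cnj (b r i) * zz r)" for i
    proof -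
      have "op_apply ?B zz i = (\<Sum>r\<in>I1. ?B i r * zz r)"
        by (rule op_apply_eq[OF bandB fI1(1)]) (use zzI in \<open>auto simp: supp_in_def\<close>)
      then show ?thesis by (simp add: adjoint_op_def)
    qed
    have "N2 zz = sum (sq zz) I1" using L5(2)[OF fI1(1) zzI] .
    also have "\<dots> = Re (\<Sum>r\<in>I1. zz r * cnj (zz r))" by (simp only: sq_def Re_sum Re_mult_cnj)
    also have "(\<Sum>r\<in>I1. zz r * cnj (zz r)) = (\<Sum>r\<in>I1. zz r * cnj (\<Sum>i\<in>I1. b r i * x i))"
      using Ax Axe by (metis)
    also have "\<dots> = (\<Sum>r\<in>I1. \<Sum>i\<in>I1. cnj (b r i) * zz r * cnj (x i))"
      by (simp add: cnj_sum sum_distrib_left mult_ac)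
    also have "\<dots> = (\<Sum>i\<in>I1. \<Sum>r\<in>I1. cnj (b r i) * zz r * cnj (x i))" by (rule sum.swap)
    also have "\<dots> = (\<Sum>i\<in>I1. op_apply ?B zz i * cnj (x i))"
      by (simp add: e1 sum_distrib_right)
    finally have "N2 zz = Re (\<Sum>i\<in>I1. op_apply ?B zz i * cnj (x i))" .
    also have "\<dots> \<le> cmod (\<Sum>i\<in>I1. op_apply ?B zz i * cnj (x i))" by (rule complex_Re_le_cmod)
    also have "\<dots> \<le> (\<Sum>i\<in>I1. \<bar>cmod (op_apply ?B zz i)\<bar> * \<bar>cmod (x i)\<bar>)"
      by (rule order.trans[OF norm_sum]) (simp add: norm_mult)
    also have "\<dots> \<le> L2_set (\<lambda>i. cmod (op_apply ?B zz i)) I1 * L2_set (\<lambda>i. cmod (x i)) I1"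
      by (rule L2_set_mult_ineq)
    also have "\<dots> \<le> l2norm (op_apply ?B zz) * l2norm x"
    proof (rule mult_mono)
      show "L2_set (\<lambda>i. cmod (op_apply ?B zz i)) I1 \<le> l2norm (op_apply ?B zz)"
        using fin_le_norm[OF Bzzl2 fI1(1)] by (simp add: L2_set_def sq_def)
      show "L2_set (\<lambda>i. cmod (x i)) I1 \<le> l2norm x"
        using fin_le_norm[OF xl2 fI1(1)] by (simp add: L2_set_def sq_def)
    qed (auto simp: l2norm_nonneg)
    finally show ?thesis .
  qed
  have N2y: "N2 y > 0" using False N2_nonneg[of y] by (auto simp: l2norm_N2)
  have nzz: "l2norm zz > 0" using N2zz P0 N2y by (simp add: l2norm_N2)
  have cx: "c * l2norm x \<le> l2norm zz" using low[OF xl2] Ax by simp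
  have "c * (l2norm zz)\<^sup>2 \<le> l2norm (op_apply ?B zz) * (c * l2norm x)"
    using ip c by (simp add: l2norm_sq mult_ac mult_left_mono)
  also have "\<dots> \<le> l2norm (op_apply ?B zz) * l2norm zz"
    using cx by (simp add: mult_left_mono l2norm_nonneg)
  finally have "c * l2norm zz \<le> l2norm (op_apply ?B zz)"
    using nzz by (simp add: power2_eq_square mult_ac)
  then have "c * sqrt P * l2norm y \<le> sqrt P * l2norm (op_apply ?B y)"
    by (simp add: l2norm_N2 N2zz N2Bzz real_sqrt_mult mult_ac)
  then show ?thesis using P0 by (simp add: mult_ac)
qed

lemma nu_adj_ge: assumes "band_op b w" "far_rec b" shows "nu b \<le> nu (adjoint_op b)"
proof (cases "nu b = 0")
  case True then show ?thesis using nu_nonneg by simp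
next
  case False
  then have c: "nu b > 0" using nu_nonneg[of b] by linarith
  have low: "\<And>x. x \<in> l2 \<Longrightarrow> nu b * l2norm x \<le> l2norm (op_apply b x)" using nu_below[OF assms(1)] .
  have bandB: "band_op (adjoint_op b) w" by (rule adj_band[OF assms(1)])
  show ?thesis unfolding nu_NS[of "adjoint_op b"]
  proof (rule cInf_greatest[OF NS_ne])
    fix t assume "t \<in> NS (adjoint_op b)"
    then obtain y where y: "y \<in> l2" "l2norm y = 1" "t = l2norm (op_apply (adjoint_op b) y)"
      unfolding NS_def by blast
    show "nu b \<le> t"
    proof (rule ccontr)
      assume "\<not> nu b \<le> t"
      then have e: "nu b - t > 0" by simp
      obtain M u where u: "supp_in u {- int M..int M}" "u \<in> l2" "l2norm u = 1"
        "l2norm (op_apply (adjoint_op b) u) < l2norm (op_apply (adjoint_op b) y) + (nu b - t)"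
        using trunc_approx[OF bandB y(1,2) e] by blast
      have "nu b * l2norm u \<le> l2norm (op_apply (adjoint_op b) u)"
        by (rule core_fin[OF assms low c u(1)])
      then show False using u(3,4) y(3) by simp
    qed
  qed
qed

lemma nu_adj_eq: assumes "band_op a w" "far_rec a" shows "nu a = nu (adjoint_op a)"
  using nu_adj_ge[OF assms] nu_adj_ge[OF adj_band[OF assms(1)] far_rec_adj[OF assms(2)]] by simp



lemma l2_complete:
  fixes X :: "nat \<Rightarrow> int \<Rightarrow> complex"
  assumes X: "\<And>n. X n \<in> l2"
    and C: "\<And>e. e > 0 \<Longrightarrow> \<exists>N. \<forall>m\<ge>N. \<forall>n\<ge>N. l2norm (\<lambda>i. X m i - X n i) \<le> e"
  shows "\<exists>x\<in>l2. \<forall>e>0. \<exists>N. \<forall>n\<ge>N. l2norm (\<lambda>i. X n i - x i) \<le> e"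
proof -
  have cau: "Cauchy (\<lambda>n. X n i)" for i
  proof (rule metric_CauchyI)
    fix e :: real assume e: "e > 0"
    obtain N where N: "\<forall>m\<ge>N. \<forall>n\<ge>N. l2norm (\<lambda>i. X m i - X n i) \<le> e/2" using C[of "e/2"] e by auto
    have "dist (X m i) (X n i) < e" if "m \<ge> N" "n \<ge> N" for m n
    proof -
      have "cmod (X m i - X n i) \<le> l2norm (\<lambda>i. X m i - X n i)"
        using l2norm_pt[OF l2_minus[OF X X]] by simp
      moreover have "l2norm (\<lambda>i. X m i - X n i) \<le> e/2" using N that by blast
      ultimately show ?thesis using e by (simp add: dist_norm)
    qed
    then show "\<exists>M. \<forall>m\<ge>M. \<forall>n\<ge>M. dist (X m i) (X n i) < e" by blast
  qed
  define x where "x = (\<lambda>i. lim (\<lambda>n. X n i))"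
  have lx: "(\<lambda>n. X n i) \<longlonglongrightarrow> x i" for i
    using cau[of i] unfolding x_def Cauchy_convergent_iff convergent_LIMSEQ_iff .
  have main: "(\<lambda>i. X n i - x i) \<in> l2 \<and> l2norm (\<lambda>i. X n i - x i) \<le> e"
    if N: "\<forall>m\<ge>N. \<forall>n\<ge>N. l2norm (\<lambda>i. X m i - X n i) \<le> e" and n: "n \<ge> N" for N n e
  proof -
    have "sqrt (sum (sq (\<lambda>i. X n i - x i)) F) \<le> e" if F: "finite F" for F
    proof (rule LIMSEQ_le_const2)
      show "(\<lambda>m. sqrt (sum (sq (\<lambda>i. X n i - X m i)) F)) \<longlonglongrightarrow> sqrt (sum (sq (\<lambda>i. X n i - x i)) F)"
        unfolding sq_def by (intro tendsto_intros lx)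
      show "\<exists>M. \<forall>m\<ge>M. sqrt (sum (sq (\<lambda>i. X n i - X m i)) F) \<le> e"
      proof (intro exI allI impI)
        fix m assume "m \<ge> N"
        then have "l2norm (\<lambda>i. X n i - X m i) \<le> e" using N n by blast
        then show "sqrt (sum (sq (\<lambda>i. X n i - X m i)) F) \<le> e"
          using fin_le_norm[OF l2_minus[OF X X] F, of n m] by linarith
      qed
    qed
    then show ?thesis using l2I_bound by blast
  qed
  obtain N1 where N1: "\<forall>m\<ge>N1. \<forall>n\<ge>N1. l2norm (\<lambda>i. X m i - X n i) \<le> 1" using C[of 1] by auto
  have "(\<lambda>i. X N1 i - x i) \<in> l2" using main[OF N1] by simp
  then have "(\<lambda>i. X N1 i - (X N1 i - x i)) \<in> l2" by (rule l2_minus[OF X])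
  then have xl2: "x \<in> l2" by simp
  have "\<forall>e>0. \<exists>N. \<forall>n\<ge>N. l2norm (\<lambda>i. X n i - x i) \<le> e"
  proof (intro allI impI)
    fix e :: real assume "e > 0"
    then obtain N where "\<forall>m\<ge>N. \<forall>n\<ge>N. l2norm (\<lambda>i. X m i - X n i) \<le> e" using C by blast
    then show "\<exists>N. \<forall>n\<ge>N. l2norm (\<lambda>i. X n i - x i) \<le> e" using main by blast
  qed
  then show ?thesis using xl2 by blast
qed

lemma N2_add: assumes "x \<in> l2" "y \<in> l2" "\<And>i. sq z i = sq x i + sq y i" shows "N2 z = N2 x + N2 y"
proof -
  have "sq z = (\<lambda>i. sq x i + sq y i)" using assms(3) by auto
  then show ?thesis unfolding N2_def using assms(1,2) by (simp add: infsum_add l2_sq)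
qed

lemma parallelogram:
  assumes "u \<in> l2" "v \<in> l2"
  shows "N2 (\<lambda>i. u i - v i) = 2 * N2 u + 2 * N2 v - N2 (\<lambda>i. u i + v i)"
proof -
  have pt: "sq (\<lambda>i. u i - v i) i + sq (\<lambda>i. u i + v i) i = sq (\<lambda>i. 2 * u i) i / 2 + sq (\<lambda>i. 2 * v i) i / 2" for i
    by (simp only: sq_def cmod_power2) (simp add: power2_eq_square field_simps)
  have s1: "(\<lambda>i. u i - v i) \<in> l2" "(\<lambda>i. u i + v i) \<in> l2" using l2_minus l2_add assms by auto
  have h: "(\<lambda>i. complex_of_real (1 / sqrt 2) * (2 * u i)) \<in> l2" "(\<lambda>i. complex_of_real (1 / sqrt 2) * (2 * v i)) \<in> l2"
    by (rule l2_scale(1)[OF l2_scale(1)[OF assms(1)]], rule l2_scale(1)[OF l2_scale(1)[OF assms(2)]])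
  have e2: "sq (\<lambda>i. complex_of_real (1 / sqrt 2) * (2 * f i)) i = sq (\<lambda>i. 2 * f i) i / 2" for f :: "int \<Rightarrow> complex" and i
    by (simp add: sq_def norm_mult norm_divide power_divide power_mult_distrib)
  have "N2 (\<lambda>i. u i - v i) + N2 (\<lambda>i. u i + v i) =
        N2 (\<lambda>i. complex_of_real (1 / sqrt 2) * (2 * u i)) + N2 (\<lambda>i. complex_of_real (1 / sqrt 2) * (2 * v i))"
  proof -
    have "N2 (\<lambda>i. u i - v i) + N2 (\<lambda>i. u i + v i) = infsum (\<lambda>i. sq (\<lambda>i. u i - v i) i + sq (\<lambda>i. u i + v i) i) UNIV"
      unfolding N2_def using s1 by (simp add: infsum_add l2_sq)
    also have "\<dots> = infsum (\<lambda>i. sq (\<lambda>i. complex_of_real (1 / sqrt 2) * (2 * u i)) i + sq (\<lambda>i. complex_of_real (1 / sqrt 2) * (2 * v i)) i) UNIV"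
      unfolding pt e2 ..
    also have "\<dots> = N2 (\<lambda>i. complex_of_real (1 / sqrt 2) * (2 * u i)) + N2 (\<lambda>i. complex_of_real (1 / sqrt 2) * (2 * v i))"
      unfolding N2_def using h by (simp add: infsum_add l2_sq)
    finally show ?thesis .
  qed
  also have "\<dots> = 2 * N2 u + 2 * N2 v"
  proof -
    have a: "N2 (\<lambda>i. complex_of_real (1 / sqrt 2) * (2 * f i)) = 2 * N2 f" if "f \<in> l2" for f
    proof -
      have "N2 (\<lambda>i. complex_of_real (1 / sqrt 2) * (2 * f i)) = (cmod (complex_of_real (1 / sqrt 2)))\<^sup>2 * N2 (\<lambda>i. 2 * f i)"
        by (rule l2_scale(2)[OF l2_scale(1)[OF that]])
      also have "N2 (\<lambda>i. 2 * f i) = (cmod 2)\<^sup>2 * N2 f" by (rule l2_scale(2)[OF that])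
      finally show ?thesis by (simp add: norm_divide power_divide)
    qed
    show ?thesis using a assms by simp
  qed
  finally show ?thesis by linarith
qed

lemma N2_local: assumes "u \<in> l2" "finite S" "\<And>j. j \<notin> S \<Longrightarrow> u' j = u j"
  shows "u' \<in> l2" "N2 u' = N2 u + (\<Sum>j\<in>S. sq u' j - sq u j)"
proof -
  have d: "supp_in (\<lambda>i. u' i - u i) S" using assms(3) by (simp add: supp_in_def)
  have "(\<lambda>i. u i + (u' i - u i)) \<in> l2" using l2_add(1)[OF assms(1) L5(1)[OF assms(2) d]] .
  then show u': "u' \<in> l2" by simp
  have s: "sq u summable_on UNIV" "sq u' summable_on UNIV" using assms(1) u' by (auto simp: l2_sq)
  have split: "N2 f = sum (sq f) S + infsum (sq f) (- S)" if "sq f summable_on UNIV" for f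
  proof -
    have "N2 f = infsum (sq f) (S \<union> - S)" by (simp add: N2_def)
    also have "\<dots> = infsum (sq f) S + infsum (sq f) (- S)"
      by (rule infsum_Un_disjoint) (auto intro: summable_on_subset_banach[OF that])
    finally show ?thesis using assms(2) by simp
  qed
  have "infsum (sq u') (- S) = infsum (sq u) (- S)"
    by (rule infsum_cong) (simp add: sq_def assms(3))
  then show "N2 u' = N2 u + (\<Sum>j\<in>S. sq u' j - sq u j)"
    using split[OF s(1)] split[OF s(2)] by (simp add: sum_subtractf)
qed

lemma pert: fixes r v :: complex and t :: complex
  shows "(cmod (r - t * v))\<^sup>2 - (cmod r)\<^sup>2 = - 2 * Re (cnj t * (r * cnj v)) + (cmod t)\<^sup>2 * (cmod v)\<^sup>2"
  by (simp only: cmod_power2) (simp add: power2_eq_square algebra_simps)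

lemma op_ev: "band_op a w \<Longrightarrow> op_apply a (ev i) = (\<lambda>j. a j i)"
proof
  fix j assume b: "band_op a w"
  have "op_apply a (ev i) j = (\<Sum>l\<in>{i}. a j l * ev i l)"
    by (rule op_apply_eq[OF b]) (auto simp: ev_def)
  then show "op_apply a (ev i) j = a j i" by (simp add: ev_def)
qed

lemma surj_op:
  assumes band: "band_op a w" and al: "nu a > 0" and be: "nu (adjoint_op a) > 0" and y: "y \<in> l2"
  shows "\<exists>x\<in>l2. op_apply a x = y"
proof -
  obtain C where C: "\<And>i j. cmod (a i j) \<le> C" using band_bound[OF band] by blast
  have C0: "C \<ge> 0" using C by (meson norm_ge_zero order.trans)
  define K where "K = real (2 * w + 1) * C"
  have K0: "K \<ge> 0" using C0 by (simp add: K_def)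
  have Al2: "\<And>x. x \<in> l2 \<Longrightarrow> op_apply a x \<in> l2" using op_bound(1)[OF band C] .
  have Ab: "\<And>x. x \<in> l2 \<Longrightarrow> l2norm (op_apply a x) \<le> K * l2norm x" using op_bound(2)[OF band C] unfolding K_def .
  define Q where "Q = {N2 (\<lambda>i. op_apply a x i - y i) | x. x \<in> l2}"
  define D where "D = Inf Q"
  have Qne: "Q \<noteq> {}" using ev_l2 unfolding Q_def by blast
  have Qbdd: "bdd_below Q" unfolding Q_def by (rule bdd_belowI[of _ 0]) (auto simp: N2_nonneg)
  have DQ: "D \<le> N2 (\<lambda>i. op_apply a x i - y i)" if "x \<in> l2" for x
    unfolding D_def by (rule cInf_lower[OF _ Qbdd]) (use that in \<open>auto simp: Q_def\<close>)
  have D0: "D \<ge> 0" unfolding D_def by (rule cInf_greatest[OF Qne]) (auto simp: Q_def N2_nonneg)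
  have "\<exists>x. x \<in> l2 \<and> N2 (\<lambda>i. op_apply a x i - y i) < D + 1 / real (Suc n)" for n
  proof -
    have "Inf Q < D + 1 / real (Suc n)" by (simp add: D_def)
    then obtain q where "q \<in> Q" "q < D + 1 / real (Suc n)" using cInf_less_iff[OF Qne Qbdd] by blast
    then show ?thesis unfolding Q_def by blast
  qed
  then obtain X where X: "\<And>n. X n \<in> l2" and XD: "\<And>n. N2 (\<lambda>i. op_apply a (X n) i - y i) < D + 1 / real (Suc n)"
    by metis
  let ?u = "\<lambda>n i. op_apply a (X n) i - y i"
  have ul2: "?u n \<in> l2" for n using l2_minus[OF Al2[OF X] y] .
  have cauN2: "(nu a)\<^sup>2 * N2 (\<lambda>i. X m i - X n i) \<le> 2 / real (Suc m) + 2 / real (Suc n)" for m n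
  proof -
    have dm: "(\<lambda>i. X m i - X n i) \<in> l2" using l2_minus[OF X X] .
    have e1: "(\<lambda>i. ?u m i - ?u n i) = op_apply a (\<lambda>i. X m i - X n i)" by (simp add: op_minus)
    define h where "h = (\<lambda>i. complex_of_real (1/2) * (X m i + X n i))"
    have hl2: "h \<in> l2" unfolding h_def using l2_scale(1)[OF l2_add(1)[OF X X]] .
    have e2: "(\<lambda>i. ?u m i + ?u n i) = (\<lambda>i. 2 * (op_apply a h i - y i))"
      unfolding h_def op_scale op_add by (auto simp: algebra_simps)
    have "N2 (\<lambda>i. ?u m i + ?u n i) = 4 * N2 (\<lambda>i. op_apply a h i - y i)"
      unfolding e2 using l2_scale(2)[OF l2_minus[OF Al2[OF hl2] y], of 2] by simp
    then have p: "N2 (\<lambda>i. ?u m i + ?u n i) \<ge> 4 * D" using DQ[OF hl2] by simp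
    have "N2 (op_apply a (\<lambda>i. X m i - X n i)) = 2 * N2 (?u m) + 2 * N2 (?u n) - N2 (\<lambda>i. ?u m i + ?u n i)"
      unfolding e1[symmetric] by (rule parallelogram[OF ul2 ul2])
    also have "\<dots> \<le> 2 / real (Suc m) + 2 / real (Suc n)" using XD[of m] XD[of n] p by simp
    finally have A: "N2 (op_apply a (\<lambda>i. X m i - X n i)) \<le> 2 / real (Suc m) + 2 / real (Suc n)" .
    have "nu a * l2norm (\<lambda>i. X m i - X n i) \<le> l2norm (op_apply a (\<lambda>i. X m i - X n i))"
      by (rule nu_below[OF band dm])
    then have "(nu a * l2norm (\<lambda>i. X m i - X n i))\<^sup>2 \<le> (l2norm (op_apply a (\<lambda>i. X m i - X n i)))\<^sup>2"
      using al by (intro power_mono) (auto simp: l2norm_nonneg)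
    then show ?thesis using A by (simp add: power_mult_distrib l2norm_sq)
  qed
  have cau: "\<exists>N. \<forall>m\<ge>N. \<forall>n\<ge>N. l2norm (\<lambda>i. X m i - X n i) \<le> e" if e: "e > 0" for e
  proof -
    obtain N where N: "inverse (real (Suc N)) < (nu a)\<^sup>2 * e\<^sup>2 / 4"
      using reals_Archimedean[of "(nu a)\<^sup>2 * e\<^sup>2 / 4"] al e by auto
    have "l2norm (\<lambda>i. X m i - X n i) \<le> e" if "m \<ge> N" "n \<ge> N" for m n
    proof -
      have "2 / real (Suc m) \<le> 2 / real (Suc N)" "2 / real (Suc n) \<le> 2 / real (Suc N)"
        using that by (auto intro!: divide_left_mono)
      moreover have "2 / real (Suc N) + 2 / real (Suc N) = 4 * inverse (real (Suc N))"
        by (simp add: inverse_eq_divide)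
      ultimately have "(nu a)\<^sup>2 * N2 (\<lambda>i. X m i - X n i) \<le> (nu a)\<^sup>2 * e\<^sup>2"
        using cauN2[of m n] N by linarith
      then have "N2 (\<lambda>i. X m i - X n i) \<le> e\<^sup>2" using al by simp
      then have "l2norm (\<lambda>i. X m i - X n i) \<le> sqrt (e\<^sup>2)" unfolding l2norm_N2 by (rule real_sqrt_le_mono)
      then show ?thesis using e by simp
    qed
    then show ?thesis by blast
  qed
  obtain x where xl2: "x \<in> l2" and xlim: "\<And>e. e > 0 \<Longrightarrow> \<exists>N. \<forall>n\<ge>N. l2norm (\<lambda>i. X n i - x i) \<le> e"
    using l2_complete[OF X cau] by blast
  define r where "r = (\<lambda>i. y i - op_apply a x i)"
  have rl2: "r \<in> l2" unfolding r_def by (rule l2_minus[OF y Al2[OF xl2]])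
  have N2r: "N2 r \<le> D"
  proof (rule ccontr)
    assume "\<not> N2 r \<le> D"
    then have g0: "l2norm r - sqrt D > 0" by (simp add: l2norm_N2)
    define g where "g = l2norm r - sqrt D"
    obtain N1 where N1: "\<forall>n\<ge>N1. l2norm (\<lambda>i. X n i - x i) \<le> g / (3 * (K + 1))"
      using xlim[of "g / (3 * (K + 1))"] g0 K0 by (auto simp: g_def)
    obtain N2' where N2': "inverse (real (Suc N2')) < (g/3)\<^sup>2"
      using reals_Archimedean[of "(g/3)\<^sup>2"] g0 by (auto simp: g_def)
    define n where "n = max N1 N2'"
    have a1: "l2norm (\<lambda>i. X n i - x i) \<le> g / (3 * (K + 1))" using N1 by (simp add: n_def)
    have a2: "1 / real (Suc n) \<le> (g/3)\<^sup>2"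
    proof -
      have "1 / real (Suc n) \<le> 1 / real (Suc N2')" by (auto simp: n_def intro!: divide_left_mono)
      then show ?thesis using N2' by (simp add: inverse_eq_divide)
    qed
    have "l2norm r = l2norm (\<lambda>i. op_apply a x i - y i)" unfolding r_def by (rule l2norm_minus_commute)
    also have "\<dots> \<le> l2norm (\<lambda>i. op_apply a x i - op_apply a (X n) i) + l2norm (?u n)"
      by (rule l2_triangle_minus[OF Al2[OF xl2] Al2[OF X] y])
    also have "l2norm (\<lambda>i. op_apply a x i - op_apply a (X n) i) \<le> K * l2norm (\<lambda>i. X n i - x i)"
    proof -
      have "l2norm (\<lambda>i. op_apply a x i - op_apply a (X n) i) = l2norm (op_apply a (\<lambda>i. x i - X n i))"
        by (simp only: op_minus)
      also have "\<dots> \<le> K * l2norm (\<lambda>i. x i - X n i)" by (rule Ab[OF l2_minus[OF xl2 X]])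
      finally show ?thesis using l2norm_minus_commute[of x "X n"] by simp
    qed
    also have "K * l2norm (\<lambda>i. X n i - x i) \<le> g / 3"
    proof -
      have "K * l2norm (\<lambda>i. X n i - x i) \<le> (K + 1) * (g / (3 * (K + 1)))"
        using a1 K0 by (intro mult_mono) (auto simp: l2norm_nonneg)
      also have "\<dots> = g / 3" using K0 by (simp add: field_simps)
      finally show ?thesis .
    qed
    also have "l2norm (?u n) \<le> sqrt D + g / 3"
    proof -
      have "l2norm (?u n) \<le> sqrt (D + 1 / real (Suc n))" unfolding l2norm_N2
        using XD[of n] by (intro real_sqrt_le_mono) simp
      also have "\<dots> \<le> sqrt D + sqrt (1 / real (Suc n))" by (rule sqrt_add_le_add_sqrt) (use D0 in auto)
      also have "sqrt (1 / real (Suc n)) \<le> sqrt ((g/3)\<^sup>2)" using a2 by (rule real_sqrt_le_mono)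
      also have "\<dots> = g / 3" using g0 by (simp add: g_def)
      finally show ?thesis by simp
    qed
    finally have "l2norm r \<le> sqrt D + 2 * g / 3" by simp
    then show False using g0 unfolding g_def by (simp add: field_simps)
  qed
  have Br: "op_apply (adjoint_op a) r i = 0" for i
  proof -
    define v where "v = (\<lambda>j. a j i)"
    define S where "S = {i - int w..i + int w}"
    have fS: "finite S" by (simp add: S_def)
    have vS: "v j = 0" if "j \<notin> S" for j
    proof -
      have "\<bar>j - i\<bar> > int w" using that by (auto simp: S_def)
      then show ?thesis using band unfolding band_op_def v_def by blast
    qed
    define p where "p = (\<Sum>j\<in>S. r j * cnj (v j))"
    define V where "V = (\<Sum>j\<in>S. (cmod (v j))\<^sup>2)"
    have V0: "V \<ge> 0" by (simp add: V_def sum_nonneg)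
    have pB: "op_apply (adjoint_op a) r i = p"
    proof -
      have "op_apply (adjoint_op a) r i = (\<Sum>j\<in>S. adjoint_op a i j * r j)"
      proof (rule op_apply_eq[OF adj_band[OF band] fS])
        fix j assume "j \<notin> S"
        then show "adjoint_op a i j * r j = 0" using vS[of j] by (simp add: adjoint_op_def v_def)
      qed
      then show ?thesis by (simp add: p_def adjoint_op_def v_def mult_ac)
    qed
    have ineq: "0 \<le> - 2 * Re (cnj t * p) + (cmod t)\<^sup>2 * V" for t
    proof -
      define x' where "x' = (\<lambda>j. x j + t * ev i j)"
      have x'l2: "x' \<in> l2" unfolding x'_def by (rule l2_add(1)[OF xl2 l2_scale(1)[OF ev_l2]])
      have Ax': "op_apply a x' = (\<lambda>j. op_apply a x j + t * v j)"
        unfolding x'_def op_add op_scale op_ev[OF band] v_def ..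
      have e: "(\<lambda>j. op_apply a x' j - y j) = (\<lambda>j. - (r j - t * v j))"
        unfolding Ax' r_def by (auto simp: algebra_simps)
      have "N2 (\<lambda>j. op_apply a x' j - y j) = N2 (\<lambda>j. r j - t * v j)"
        unfolding e by (simp add: N2_def sq_def norm_minus_commute)
      also have "\<dots> = N2 r + (\<Sum>j\<in>S. sq (\<lambda>j. r j - t * v j) j - sq r j)"
        by (rule N2_local(2)[OF rl2 fS]) (simp add: vS)
      finally have "D \<le> N2 r + (\<Sum>j\<in>S. sq (\<lambda>j. r j - t * v j) j - sq r j)"
        using DQ[OF x'l2] by simp
      then have "0 \<le> (\<Sum>j\<in>S. sq (\<lambda>j. r j - t * v j) j - sq r j)" using N2r by simp
      also have "\<dots> = (\<Sum>j\<in>S. - 2 * Re (cnj t * (r j * cnj (v j))) + (cmod t)\<^sup>2 * (cmod (v j))\<^sup>2)"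
        unfolding sq_def pert ..
      also have "\<dots> = - 2 * Re (cnj t * p) + (cmod t)\<^sup>2 * V"
      proof -
        have lin: "(\<Sum>j\<in>S. - 2 * X j + c * Y j) = - 2 * (\<Sum>j\<in>S. X j) + c * (\<Sum>j\<in>S. Y j)"
          for X Y :: "int \<Rightarrow> real" and c by (simp only: sum.distrib sum_distrib_left)
        have re: "(\<Sum>j\<in>S. Re (cnj t * (r j * cnj (v j)))) = Re (cnj t * p)"
          by (simp only: p_def sum_distrib_left Re_sum)
        show ?thesis unfolding lin re V_def ..
      qed
      finally show ?thesis .
    qed
    define s where "s = 1 / (V + 1)"
    have s0: "s > 0" "s * V < 1" using V0 by (auto simp: s_def field_simps)
    have "0 \<le> - 2 * Re (cnj (complex_of_real s * p) * p) + (cmod (complex_of_real s * p))\<^sup>2 * V"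
      by (rule ineq)
    also have "\<dots> = s * (cmod p)\<^sup>2 * (s * V - 2)"
    proof -
      have eq: "cnj (complex_of_real s * p) * p = complex_of_real (s * (cmod p)\<^sup>2)"
      proof -
        have "p * cnj p = (complex_of_real (cmod p))\<^sup>2" using complex_norm_square[of p] by simp
        then show ?thesis by (simp add: mult_ac)
      qed
      have f1: "Re (cnj (complex_of_real s * p) * p) = s * (cmod p)\<^sup>2"
        unfolding eq by (simp only: Re_complex_of_real)
      have f2: "(cmod (complex_of_real s * p))\<^sup>2 = s\<^sup>2 * (cmod p)\<^sup>2"
        using s0 by (simp add: norm_mult power_mult_distrib)
      show ?thesis unfolding f1 f2 by (simp add: algebra_simps power2_eq_square)
    qed
    finally have "0 \<le> s * (cmod p)\<^sup>2 * (s * V - 2)" .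
    moreover have "s * V - 2 < 0" using s0 by simp
    ultimately have "s * (cmod p)\<^sup>2 * (s * V - 2) = 0"
      using mult_nonneg_nonpos[of "s * (cmod p)\<^sup>2" "s * V - 2"] s0 by simp
    then have "s * (cmod p)\<^sup>2 = 0" using \<open>s * V - 2 < 0\<close> by simp
    then have "p = 0" using s0 by simp
    then show ?thesis using pB by simp
  qed
  have "nu (adjoint_op a) * l2norm r \<le> l2norm (op_apply (adjoint_op a) r)"
    by (rule nu_below[OF adj_band[OF band] rl2])
  also have "op_apply (adjoint_op a) r = (\<lambda>i. 0)" using Br by auto
  finally have "l2norm r \<le> 0" using be by (simp add: l2norm_N2 N2_def sq_def mult_le_0_iff)
  then have "r = (\<lambda>i. 0)" using l2norm_zero[OF rl2] l2norm_nonneg[of r] by simp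
  then have "op_apply a x = y" unfolding r_def by (auto simp: fun_eq_iff dest: fun_cong)
  then show ?thesis using xl2 by blast
qed



lemma h4: "(cmod ((1 / 2) ^ m * v))\<^sup>2 = (1/4::real)^m * (cmod v)\<^sup>2"
proof -
  have "((1/2::real)^m)\<^sup>2 = (1/4)^m" by (simp add: power2_eq_square power_mult_distrib[symmetric])
  moreover have "cmod ((1 / 2) ^ m * v) = (1/2)^m * cmod v" by (simp add: norm_mult norm_power norm_divide)
  ultimately show ?thesis by (simp add: power_mult_distrib)
qed

lemma mcnj: "z * cnj z = (complex_of_real (cmod z))\<^sup>2"
  using complex_norm_square[of z] by simp

lemma geo_bound: "finite Ms \<Longrightarrow> (\<Sum>m\<in>Ms. (1/4::real)^m) \<le> 4/3"
proof -
  assume f: "finite Ms"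
  have "(\<Sum>m\<in>Ms. (1/4::real)^m) \<le> suminf (\<lambda>m. (1/4::real)^m)"
    by (rule sum_le_suminf[OF summable_geometric f]) auto
  also have "\<dots> = 4/3" by (subst suminf_geometric) auto
  finally show ?thesis .
qed

lemma not_surj:
  assumes band: "band_op a w" and fr: "far_rec a" and z0: "nu (adjoint_op a) = 0"
  shows "\<exists>z\<in>l2. \<not> (\<exists>x\<in>l2. op_apply a x = z)"
proof -
  let ?B = "adjoint_op a"
  have bandB: "band_op ?B w" by (rule adj_band[OF band])
  have frB: "far_rec ?B" by (rule far_rec_adj[OF fr])
  obtain C where C: "\<And>i j. cmod (a i j) \<le> C" using band_bound[OF band] by blast
  have CB: "\<And>i j. cmod (?B i j) \<le> C" using C by (simp add: adjoint_op_def)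
  have approx: "\<exists>M u. supp_in u {- int M..int M} \<and> u \<in> l2 \<and> l2norm u = 1 \<and> l2norm (op_apply ?B u) < (1/4)^m" for m :: nat
  proof -
    have e: "(1/4::real)^m / 2 > 0" by simp
    obtain y where y: "y \<in> l2" "l2norm y = 1" "l2norm (op_apply ?B y) < nu ?B + (1/4)^m / 2"
      using nu_approx[OF e] by blast
    obtain M u where u: "supp_in u {- int M..int M}" "u \<in> l2" "l2norm u = 1"
      "l2norm (op_apply ?B u) < l2norm (op_apply ?B y) + (1/4)^m / 2"
      using trunc_approx[OF bandB y(1,2) e] by blast
    show ?thesis using u y(3) z0 by (intro exI[of _ M] exI[of _ u]) auto
  qed
  then obtain Mm :: "nat \<Rightarrow> nat" and U where
    U: "\<And>m. supp_in (U m) {- int (Mm m)..int (Mm m)}" "\<And>m. U m \<in> l2" "\<And>m. l2norm (U m) = 1"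
       "\<And>m. l2norm (op_apply ?B (U m)) < (1/4)^m"
    by metis
  define R where "R = (\<lambda>m. int (Mm m) + int w)"
  obtain k :: "nat \<Rightarrow> int" where rk: "\<And>m. recur ?B (R m) (k m)"
      and kd: "\<And>l m. l < m \<Longrightarrow> \<bar>k m\<bar> > \<bar>k l\<bar> + R m + R l"
    using copy_seq[OF frB, of R] by (auto simp: R_def)
  define V where "V = (\<lambda>m. shift (k m) (U m))"
  define W where "W = (\<lambda>m. {k m - R m..k m + R m})"
  have disj: "W l \<inter> W m = {}" if "l \<noteq> m" for l m
  proof (cases "l < m")
    case True then show ?thesis unfolding W_def using copy_disj[OF kd[OF True]] by blast
  next
    case False then have "m < l" using that by simp
    then show ?thesis unfolding W_def using copy_disj[OF kd[of m l]] by blast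
  qed
  have fW: "finite (W m)" for m by (simp add: W_def)
  have Vs: "supp_in (V m) (W m)" for m
    using shift_supp[OF U(1), of "k m"] unfolding V_def W_def R_def supp_in_def by auto
  have Vl2: "V m \<in> l2" "N2 (V m) = 1" for m
    using shift_N2[OF U(1)] U(3)[of m] unfolding V_def by (auto simp: l2norm_N2)
  have BUs: "supp_in (op_apply ?B (U m)) {- int (Mm m + w)..int (Mm m + w)}" for m
    by (rule op_supp[OF bandB U(1)])
  have BV: "op_apply ?B (V m) = shift (k m) (op_apply ?B (U m))" for m
    unfolding V_def by (rule shift_op[OF bandB _ U(1)]) (use rk in \<open>simp add: R_def\<close>)
  have BVl2: "op_apply ?B (V m) \<in> l2" for m by (rule op_bound(1)[OF bandB CB Vl2(1)])
  have BVn: "l2norm (op_apply ?B (V m)) < (1/4)^m" for m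
    using shift_N2(2)[OF BUs[of m], of "k m"] U(4)[of m] unfolding BV by (simp add: l2norm_N2)
  define idx where "idx = (\<lambda>i. THE m. i \<in> W m)"
  have idx: "idx i = m" if "i \<in> W m" for i m
    unfolding idx_def using that disj by (intro the_equality) auto
  define z where "z = (\<lambda>i. if \<exists>m. i \<in> W m then complex_of_real ((1/2)^(idx i)) * V (idx i) i else 0)"
  have zW: "z i = complex_of_real ((1/2)^m) * V m i" if "i \<in> W m" for i m
    using that idx[OF that] unfolding z_def by auto
  have zl2: "z \<in> l2"
  proof (rule L2(1))
    fix F :: "int set" assume F: "finite F"
    define G where "G = F \<inter> (\<Union>m. W m)"
    define Ms where "Ms = idx ` G"
    have fG: "finite G" using F by (simp add: G_def)
    have fMs: "finite Ms" using fG by (simp add: Ms_def)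
    have GU: "G = (\<Union>m\<in>Ms. F \<inter> W m)"
    proof
      show "G \<subseteq> (\<Union>m\<in>Ms. F \<inter> W m)"
      proof
        fix i assume "i \<in> G"
        then obtain m where "i \<in> F" "i \<in> W m" by (auto simp: G_def)
        then show "i \<in> (\<Union>m\<in>Ms. F \<inter> W m)" using idx \<open>i \<in> G\<close> unfolding Ms_def by force
      qed
      show "(\<Union>m\<in>Ms. F \<inter> W m) \<subseteq> G" by (auto simp: G_def)
    qed
    have "sum (sq z) F = sum (sq z) G"
      using F by (intro sum.mono_neutral_right) (auto simp: G_def z_def sq_def)
    also have "\<dots> = (\<Sum>m\<in>Ms. sum (sq z) (F \<inter> W m))"
      unfolding GU using F fMs disj by (intro sum.UNION_disjoint) auto
    also have "\<dots> \<le> (\<Sum>m\<in>Ms. (1/4::real)^m)"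
    proof (rule sum_mono)
      fix m assume "m \<in> Ms"
      have "sum (sq z) (F \<inter> W m) = (\<Sum>i\<in>F \<inter> W m. (1/4)^m * sq (V m) i)"
        by (intro sum.cong refl) (auto simp: zW sq_def h4)
      also have "\<dots> = (1/4)^m * sum (sq (V m)) (F \<inter> W m)" by (simp add: sum_distrib_left)
      also have "\<dots> \<le> (1/4)^m * N2 (V m)" using L1[OF Vl2(1), of "F \<inter> W m"] F
        by (intro mult_left_mono) auto
      finally show "sum (sq z) (F \<inter> W m) \<le> (1/4)^m" using Vl2(2) by simp
    qed
    also have "\<dots> \<le> 4/3" by (rule geo_bound[OF fMs])
    finally show "sum (sq z) F \<le> 4/3" .
  qed
  have "\<not> (\<exists>x\<in>l2. op_apply a x = z)"
  proof
    assume "\<exists>x\<in>l2. op_apply a x = z"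
    then obtain x where xl2: "x \<in> l2" and Ax: "op_apply a x = z" by blast
    have bnd: "(1/2::real)^m \<le> l2norm x * (1/4)^m" for m
    proof -
      define W2 where "W2 = {k m - R m - int w..k m + R m + int w}"
      have fW2: "finite W2" by (simp add: W2_def)
      have zA: "z i = (\<Sum>j\<in>W2. a i j * x j)" if "i \<in> W m" for i
      proof -
        have "op_apply a x i = (\<Sum>j\<in>W2. a i j * x j)"
        proof (rule op_apply_eq[OF band fW2])
          fix j assume "j \<notin> W2"
          then have "\<bar>i - j\<bar> > int w" using that by (auto simp: W_def W2_def)
          then show "a i j * x j = 0" using band unfolding band_op_def by auto
        qed
        then show ?thesis using Ax by simp
      qed
      have BVe: "op_apply ?B (V m) j = (\<Sum>i\<in>W m. cnj (a i j) * V m i)" for j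
      proof -
        have "op_apply ?B (V m) j = (\<Sum>i\<in>W m. ?B j i * V m i)"
          by (rule op_apply_eq[OF bandB fW]) (use Vs in \<open>auto simp: supp_in_def\<close>)
        then show ?thesis by (simp add: adjoint_op_def)
      qed
      have "(\<Sum>i\<in>W m. cnj (V m i) * z i) = complex_of_real ((1/2)^m) * (\<Sum>i\<in>W m. cnj (V m i) * V m i)"
        by (simp add: zW sum_distrib_left mult_ac)
      also have "(\<Sum>i\<in>W m. cnj (V m i) * V m i) = complex_of_real (sum (sq (V m)) (W m))"
        by (simp add: sq_def mcnj mult_ac)
      also have "sum (sq (V m)) (W m) = 1" using L5(2)[OF fW Vs] Vl2(2) by simp
      finally have lhs: "(\<Sum>i\<in>W m. cnj (V m i) * z i) = complex_of_real ((1/2)^m)" by simp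
      have "(\<Sum>i\<in>W m. cnj (V m i) * z i) = (\<Sum>i\<in>W m. \<Sum>j\<in>W2. cnj (V m i) * a i j * x j)"
        by (intro sum.cong refl) (simp add: zA sum_distrib_left mult_ac)
      also have "\<dots> = (\<Sum>j\<in>W2. \<Sum>i\<in>W m. cnj (V m i) * a i j * x j)" by (rule sum.swap)
      also have "\<dots> = (\<Sum>j\<in>W2. x j * cnj (op_apply ?B (V m) j))"
        by (simp add: BVe cnj_sum sum_distrib_left mult_ac)
      finally have eq: "complex_of_real ((1/2)^m) = (\<Sum>j\<in>W2. x j * cnj (op_apply ?B (V m) j))"
        using lhs by simp
      have "(1/2::real)^m = cmod (complex_of_real ((1/2)^m))" by (simp only: norm_of_real) simp
      also have "\<dots> \<le> (\<Sum>j\<in>W2. \<bar>cmod (x j)\<bar> * \<bar>cmod (op_apply ?B (V m) j)\<bar>)"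
        unfolding eq by (rule order.trans[OF norm_sum]) (simp add: norm_mult)
      also have "\<dots> \<le> L2_set (\<lambda>j. cmod (x j)) W2 * L2_set (\<lambda>j. cmod (op_apply ?B (V m) j)) W2"
        by (rule L2_set_mult_ineq)
      also have "\<dots> \<le> l2norm x * l2norm (op_apply ?B (V m))"
      proof (rule mult_mono)
        show "L2_set (\<lambda>j. cmod (x j)) W2 \<le> l2norm x"
          using fin_le_norm[OF xl2 fW2] by (simp add: L2_set_def sq_def)
        show "L2_set (\<lambda>j. cmod (op_apply ?B (V m) j)) W2 \<le> l2norm (op_apply ?B (V m))"
          using fin_le_norm[OF BVl2 fW2] by (simp add: L2_set_def sq_def)
      qed (auto simp: l2norm_nonneg)
      also have "\<dots> \<le> l2norm x * (1/4)^m"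
        using BVn[of m] by (intro mult_left_mono) (auto simp: l2norm_nonneg)
      finally show ?thesis .
    qed
    obtain m where m: "l2norm x < 2^m" using real_arch_pow[of 2 "l2norm x"] by auto
    have "(1/2::real)^m * 4^m \<le> l2norm x * (1/4)^m * 4^m" using bnd[of m] by (intro mult_right_mono) auto
    moreover have "(1/2::real)^m * 4^m = 2^m"
      by (simp add: power_mult_distrib[symmetric])
    moreover have "(1/4::real)^m * 4^m = 1" by (simp add: power_mult_distrib[symmetric])
    ultimately have "2^m \<le> l2norm x" by (simp add: mult.assoc)
    then show False using m by simp
  qed
  then show ?thesis using zl2 by blast
qed



lemma inv_part: assumes band: "band_op a w" and fr: "far_rec a"
  shows "ereal (nu a) = 1 / inv_norm a"
proof (cases "nu a = 0")
  case True
  then have "nu (adjoint_op a) = 0" using nu_adj_eq[OF band fr] by simp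
  then obtain z where z: "z \<in> l2" "\<not> (\<exists>x\<in>l2. op_apply a x = z)" using not_surj[OF band fr] by blast
  have "\<not> op_invertible a"
  proof
    assume "op_invertible a"
    then have "op_apply a ` l2 = l2" unfolding op_invertible_def bij_betw_def by blast
    then have "z \<in> op_apply a ` l2" using z(1) by simp
    then obtain x where "x \<in> l2" "op_apply a x = z" by (auto simp: image_iff)
    then show False using z(2) by blast
  qed
  then show ?thesis using True by (simp add: inv_norm_def)
next
  case False
  let ?f = "op_apply a"
  have al: "nu a > 0" using False nu_nonneg[of a] by linarith
  have be: "nu (adjoint_op a) > 0" using al nu_adj_eq[OF band fr] by simp
  obtain C where C: "\<And>i j. cmod (a i j) \<le> C" using band_bound[OF band] by blast
  have Al2: "\<And>x. x \<in> l2 \<Longrightarrow> ?f x \<in> l2" using op_bound(1)[OF band C] .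
  have inj: "inj_on ?f l2"
  proof (rule inj_onI)
    fix x x' assume x: "x \<in> l2" "x' \<in> l2" "?f x = ?f x'"
    have d: "(\<lambda>i. x i - x' i) \<in> l2" by (rule l2_minus[OF x(1,2)])
    have "nu a * l2norm (\<lambda>i. x i - x' i) \<le> l2norm (?f (\<lambda>i. x i - x' i))" by (rule nu_below[OF band d])
    also have "?f (\<lambda>i. x i - x' i) = (\<lambda>i. 0)" unfolding op_minus using x(3) by simp
    finally have "l2norm (\<lambda>i. x i - x' i) \<le> 0" using al by (simp add: l2norm_N2 N2_def sq_def mult_le_0_iff)
    then have "(\<lambda>i. x i - x' i) = (\<lambda>i. 0)" using l2norm_zero[OF d] l2norm_nonneg[of "\<lambda>i. x i - x' i"] by simp
    then show "x = x'" by (auto simp: fun_eq_iff dest: fun_cong)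
  qed
  have img: "?f ` l2 = l2"
  proof
    show "?f ` l2 \<subseteq> l2" using Al2 by blast
    show "l2 \<subseteq> ?f ` l2" using surj_op[OF band al be] by blast
  qed
  have inv: "op_invertible a" unfolding op_invertible_def bij_betw_def using inj img by blast
  let ?g = "inv_into l2 ?f"
  have g: "?g y \<in> l2" "?f (?g y) = y" if "y \<in> l2" for y
  proof -
    have "y \<in> ?f ` l2" using that img by simp
    then show "?g y \<in> l2" "?f (?g y) = y" by (rule inv_into_into, rule f_inv_into_f)
  qed
  define T where "T = {l2norm (?g y) | y. y \<in> l2 \<and> l2norm y = 1}"
  have up: "t \<le> 1 / nu a" if "t \<in> T" for t
  proof -
    obtain y where y: "y \<in> l2" "l2norm y = 1" "t = l2norm (?g y)" using \<open>t \<in> T\<close> unfolding T_def by blast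
    have "nu a * l2norm (?g y) \<le> l2norm (?f (?g y))" by (rule nu_below[OF band g(1)[OF y(1)]])
    then have "nu a * t \<le> 1" using g(2)[OF y(1)] y by simp
    then show ?thesis using al by (simp add: field_simps)
  qed
  have Tne: "T \<noteq> {}" using ev_l2 ev_norm unfolding T_def by blast
  have Tbdd: "bdd_above T" using up by (intro bdd_aboveI) blast
  have lo: "1 / l2norm (?f x) \<le> Sup T \<and> l2norm (?f x) > 0" if x: "x \<in> l2" "l2norm x = 1" for x
  proof -
    define t where "t = l2norm (?f x)"
    have t: "t \<ge> nu a" unfolding t_def by (rule nu_le[OF x])
    then have t0: "t > 0" using al by simp
    define c where "c = complex_of_real (1 / t)"
    have cm: "cmod c = 1 / t" using t0 by (simp add: c_def norm_divide)
    have cx: "(\<lambda>i. c * x i) \<in> l2" by (rule l2_scale(1)[OF x(1)])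
    have y: "?f (\<lambda>i. c * x i) \<in> l2" "l2norm (?f (\<lambda>i. c * x i)) = 1"
      using Al2[OF cx] l2_scale(3)[OF Al2[OF x(1)], of c] cm t0 unfolding op_scale t_def by auto
    have "?g (?f (\<lambda>i. c * x i)) = (\<lambda>i. c * x i)" by (rule inv_into_f_f[OF inj cx])
    then have "l2norm (?g (?f (\<lambda>i. c * x i))) = 1 / t" using l2_scale(3)[OF x(1), of c] cm x(2) by simp
    then have "1 / t \<in> T" using y unfolding T_def by (metis (mono_tags, lifting) mem_Collect_eq)
    then have "1 / t \<le> Sup T" by (rule cSup_upper[OF _ Tbdd])
    then show ?thesis using t0 unfolding t_def by simp
  qed
  have S1: "Sup T \<le> 1 / nu a" by (rule cSup_least[OF Tne up])
  have Spos: "Sup T > 0"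
  proof -
    have "1 / l2norm (?f (ev 0)) \<le> Sup T" "l2norm (?f (ev 0)) > 0" using lo[OF ev_l2 ev_norm] by auto
    moreover have "1 / l2norm (?f (ev 0)) > 0" using calculation(2) by simp
    ultimately show ?thesis by linarith
  qed
  have S2: "1 / Sup T \<le> nu a" unfolding nu_NS
  proof (rule cInf_greatest[OF NS_ne])
    fix t assume "t \<in> NS a"
    then obtain x where x: "x \<in> l2" "l2norm x = 1" "t = l2norm (?f x)" unfolding NS_def by blast
    have "1 / t \<le> Sup T" "t > 0" using lo[OF x(1,2)] x(3) by auto
    then show "1 / Sup T \<le> t" using Spos by (simp add: field_simps)
  qed
  have "Sup T = 1 / nu a"
  proof -
    have "nu a * Sup T \<le> 1" using S1 al by (simp add: field_simps)
    moreover have "1 \<le> nu a * Sup T" using S2 Spos by (simp add: field_simps)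
    ultimately have "nu a * Sup T = 1" by linarith
    then show ?thesis using al by (simp add: field_simps)
  qed
  then have "inv_norm a = ereal (1 / nu a)" using inv unfolding inv_norm_def T_def by simp
  then show ?thesis using al by (simp add: one_ereal_def)
qed

theorem lemma3p4:
  fixes a :: "int \<Rightarrow> int \<Rightarrow> complex" and w :: nat
  assumes "band_op a w" and "self_contained a w"
  shows "nu a = nu (adjoint_op a)
    \<and> (\<forall>N\<ge>1. nu_N a (Suc N) \<le> nu_N a N)
    \<and> (\<lambda>N. nu_N a N) \<longlonglongrightarrow> nu a
    \<and> ereal (nu a) = 1 / inv_norm a"
proof (intro conjI allI impI)
  have fr: "far_rec a" by (rule sc_far_rec[OF assms(2)])
  show "nu a = nu (adjoint_op a)" by (rule nu_adj_eq[OF assms(1) fr])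
  show "nu_N a (Suc N) \<le> nu_N a N" if "N \<ge> 1" for N using nuN_mono[OF that] by simp
  show "(\<lambda>N. nu_N a N) \<longlonglongrightarrow> nu a" by (rule nuN_conv[OF assms(1)])
  show "ereal (nu a) = 1 / inv_norm a" by (rule inv_part[OF assms(1) fr])
qed


end
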